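(* Let $\pi:L_{\mathcal F}\to L_{\mathcal G}$ satisfy (REG) and define for $X\in L_{\mathcal F}$ \[H(X):=\sup_{Q\in L^*_{\mathcal F}\cap\mathcal P}K(X,Q).\] Then: (i) $H$ is monotone increasing; (ii) $H(X\mathbf 1_A)\mathbf 1_A=H(X)\mathbf 1_A$ for every $A\in\mathcal G$ and $X\in L_{\mathcal F}$; (iii) for every $X\in L_{\mathcal F}$ there exist a sequence $(Q^k)_{k\ge1}\subseteq L^*_{\mathcal F}\cap\mathcal P$ and, for each $k$, a sequence $(\xi^{Q^k}_m)_{m\ge1}\subseteq L_{\mathcal F}$ with $E_{Q^k}[\xi^{Q^k}_m\mid\mathcal G]\ge_{Q^k}E_{Q^k}[X\mid\mathcal G]$, such that $\pi(\xi^{Q^k}_m)\downarrow K(X,Q^k)$ as $m\uparrow\infty$, $K(X,Q^k)\uparrow H(X)$ as $k\uparrow\infty$, and $H(X)=\lim_{k\to\infty}\lim_{m\to\infty}\pi(\xi^{Q^k}_m)$.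
   Context: Let $(\Omega,\mathcal F,\mathbb P)$ be a probability space, $\mathcal G\subseteq\mathcal F$ a sub-$\sigma$-algebra. (In)equalities hold $\mathbb P$-a.s. unless a measure is indicated ($\ge_Q$: $Q$-a.s.); $\sup,\inf$ are $\mathbb P$-essential. $L_{\mathcal F}\subseteq L^0(\Omega,\mathcal F,\mathbb P)$, $L_{\mathcal G}\subseteq L^0(\Omega,\mathcal G,\mathbb P)$ are vector lattices closed under multiplication by indicators of $\mathcal F$- (resp. $\mathcal G$-) measurable sets; the order continuous dual $L^*_{\mathcal F}$ of $(L_{\mathcal F},\ge)$ is a lattice contained in $L^1(\Omega,\mathcal F,\mathbb P)$ (functionals $X\mapsto E_{\mathbb P}[ZX]$), closed under multiplication by indicators of sets in $\mathcal F$. $\mathcal P$ = densities $dQ/d\mathbb P$ of probabilities $Q\ll\mathbb P$. (REG): $\pi(X\mathbf 1_A+Y\mathbf 1_{A^c})=\pi(X)\mathbf 1_A+\pi(Y)\mathbf 1_{A^c}$ for $A\in\mathcal G$. $K(X,Q):=\inf_{\xi\in L_{\mathcal F}}\{\pi(\xi)\mid E_Q[\xi\mid\mathcal G]\ge_Q E_Q[X\mid\mathcal G]\}$. *)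

theory Defs
  imports "HOL-Probability.Probability"
begin

text \<open>Random variables are represented by functions; (in)equalities are understood
  P-a.s. (M is the probability space, AE is always w.r.t. M unless another measure is shown).\<close>

definition ae_le :: "'a measure \<Rightarrow> ('a \<Rightarrow> real) \<Rightarrow> ('a \<Rightarrow> real) \<Rightarrow> bool" where
  "ae_le M X Y \<longleftrightarrow> (AE x in M. X x \<le> Y x)"

text \<open>L is (a set of representatives of) a vector lattice in L^0(Omega,S,P), closed under
  multiplication by indicators of S-measurable sets; being a set of equivalence classes,
  it is closed under P-a.s. equality.\<close>
definition vec_lattice :: "'a measure \<Rightarrow> 'a measure \<Rightarrow> ('a \<Rightarrow> real) set \<Rightarrow> bool" where
  "vec_lattice M S L \<longleftrightarrow>
     L \<subseteq> borel_measurable S \<and> (\<lambda>_. 0) \<in> L \<and>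
     (\<forall>X\<in>L. \<forall>Y\<in>L. (\<lambda>x. X x + Y x) \<in> L) \<and>
     (\<forall>c::real. \<forall>X\<in>L. (\<lambda>x. c * X x) \<in> L) \<and>
     (\<forall>X\<in>L. \<forall>Y\<in>L. (\<lambda>x. max (X x) (Y x)) \<in> L) \<and>
     (\<forall>X\<in>L. \<forall>A\<in>sets S. (\<lambda>x. X x * indicator A x) \<in> L) \<and>
     (\<forall>X\<in>L. \<forall>Y\<in>borel_measurable S. (AE x in M. X x = Y x) \<longrightarrow> Y \<in> L)"

text \<open>Order continuity of a functional on the lattice (L, a.s. order): for every downward
  directed D \<subseteq> L with infimum 0 in L (i.e. the net D decreases to 0), phi(X) converges to 0
  along the net D.\<close>
definition order_continuous_fun ::
  "'a measure \<Rightarrow> ('a \<Rightarrow> real) set \<Rightarrow> (('a \<Rightarrow> real) \<Rightarrow> real) \<Rightarrow> bool" where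
  "order_continuous_fun M L \<phi> \<longleftrightarrow>
     (\<forall>D. D \<subseteq> L \<and> D \<noteq> {} \<and>
          (\<forall>X\<in>D. \<forall>Y\<in>D. \<exists>W\<in>D. ae_le M W X \<and> ae_le M W Y) \<and>
          (\<forall>X\<in>D. ae_le M (\<lambda>_. 0) X) \<and>
          (\<forall>W\<in>L. (\<forall>X\<in>D. ae_le M W X) \<longrightarrow> ae_le M W (\<lambda>_. 0))
        \<longrightarrow> (\<forall>e>0. \<exists>X0\<in>D. \<forall>X\<in>D. ae_le M X X0 \<longrightarrow> \<bar>\<phi> X\<bar> < e))"

text \<open>Order continuous dual, identified with the L^1 densities Z of the functionals X \<mapsto> E[ZX].\<close>
definition oc_dual :: "'a measure \<Rightarrow> ('a \<Rightarrow> real) set \<Rightarrow> ('a \<Rightarrow> real) set" where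
  "oc_dual M L = {Z. integrable M Z \<and> (\<forall>X\<in>L. integrable M (\<lambda>x. Z x * X x)) \<and>
                      order_continuous_fun M L (\<lambda>X. \<integral>x. Z x * X x \<partial>M)}"

text \<open>The set \<P> of densities dQ/dP of probability measures Q \<ll> P.\<close>
definition prob_densities :: "'a measure \<Rightarrow> ('a \<Rightarrow> real) set" where
  "prob_densities M = {Z. Z \<in> borel_measurable M \<and> (AE x in M. 0 \<le> Z x) \<and> (\<integral>x. Z x \<partial>M) = 1}"

definition dens_meas :: "'a measure \<Rightarrow> ('a \<Rightarrow> real) \<Rightarrow> 'a measure" where
  "dens_meas M Z = density M (\<lambda>x. ennreal (Z x))"

definition is_ess_sup :: "'a measure \<Rightarrow> ('a \<Rightarrow> ereal) set \<Rightarrow> ('a \<Rightarrow> ereal) \<Rightarrow> bool" where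
  "is_ess_sup M S Y \<longleftrightarrow> Y \<in> borel_measurable M \<and> (\<forall>f\<in>S. AE x in M. f x \<le> Y x) \<and>
     (\<forall>Y'\<in>borel_measurable M. (\<forall>f\<in>S. AE x in M. f x \<le> Y' x) \<longrightarrow> (AE x in M. Y x \<le> Y' x))"

definition is_ess_inf :: "'a measure \<Rightarrow> ('a \<Rightarrow> ereal) set \<Rightarrow> ('a \<Rightarrow> ereal) \<Rightarrow> bool" where
  "is_ess_inf M S Y \<longleftrightarrow> Y \<in> borel_measurable M \<and> (\<forall>f\<in>S. AE x in M. Y x \<le> f x) \<and>
     (\<forall>Y'\<in>borel_measurable M. (\<forall>f\<in>S. AE x in M. Y' x \<le> f x) \<longrightarrow> (AE x in M. Y' x \<le> Y x))"

definition ess_sup_fam :: "'a measure \<Rightarrow> ('a \<Rightarrow> ereal) set \<Rightarrow> ('a \<Rightarrow> ereal)" where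
  "ess_sup_fam M S = (SOME Y. is_ess_sup M S Y)"

definition ess_inf_fam :: "'a measure \<Rightarrow> ('a \<Rightarrow> ereal) set \<Rightarrow> ('a \<Rightarrow> ereal)" where
  "ess_inf_fam M S = (SOME Y. is_ess_inf M S Y)"

definition Kfun :: "'a measure \<Rightarrow> 'a measure \<Rightarrow> (('a \<Rightarrow> real) \<Rightarrow> ('a \<Rightarrow> real)) \<Rightarrow>
    ('a \<Rightarrow> real) set \<Rightarrow> ('a \<Rightarrow> real) \<Rightarrow> ('a \<Rightarrow> real) \<Rightarrow> ('a \<Rightarrow> ereal)" where
  "Kfun M G \<pi> LF X Z = ess_inf_fam M
     {(\<lambda>x. ereal (\<pi> \<xi> x)) | \<xi>. \<xi> \<in> LF \<and>
        (AE x in dens_meas M Z. real_cond_exp (dens_meas M Z) G \<xi> x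
                                 \<ge> real_cond_exp (dens_meas M Z) G X x)}"

definition Hfun :: "'a measure \<Rightarrow> 'a measure \<Rightarrow> (('a \<Rightarrow> real) \<Rightarrow> ('a \<Rightarrow> real)) \<Rightarrow>
    ('a \<Rightarrow> real) set \<Rightarrow> ('a \<Rightarrow> real) \<Rightarrow> ('a \<Rightarrow> ereal)" where
  "Hfun M G \<pi> LF X = ess_sup_fam M
     {Kfun M G \<pi> LF X Z | Z. Z \<in> oc_dual M LF \<inter> prob_densities M}"

end

theory Submission
  imports Defs
begin

definition phi :: "ereal \<Rightarrow> real" where
  "phi t = (if t = \<infinity> then 2 else if t = -\<infinity> then -2 else arctan (real_of_ereal t))"

lemma phi_bounds: "-2 \<le> phi t \<and> phi t \<le> 2"
proof -
  have "-2 \<le> arctan r \<and> arctan r \<le> 2" for r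
    using arctan_bounded[of r] pi_less_4 by (auto simp: field_simps)
  then show ?thesis by (simp add: phi_def)
qed

lemma phi_abs: "\<bar>phi t\<bar> \<le> 2"
  using phi_bounds[of t] by auto

lemma phi_strict: "s < t \<Longrightarrow> phi s < phi t"
proof -
  have b: "-2 < arctan r \<and> arctan r < 2" for r
    using arctan_bounded[of r] pi_less_4 by (auto simp: field_simps)
  assume "s < t" then show ?thesis
    using b by (cases s; cases t) (auto simp: phi_def arctan_less_iff)
qed

lemma phi_mono: "s \<le> t \<Longrightarrow> phi s \<le> phi t"
  using phi_strict by (cases "s = t") (auto simp: order_le_less)

lemma phi_meas[measurable]: "f \<in> borel_measurable M \<Longrightarrow> (\<lambda>x. phi (f x)) \<in> borel_measurable M"
proof -
  assume f: "f \<in> borel_measurable M"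
  have "(\<lambda>x. phi (ereal (real_of_ereal (f x)))) \<in> borel_measurable M"
    using f by (simp add: phi_def)
  then show ?thesis by (rule borel_measurable_ereal_cases[OF f])
qed

lemma ess_inf_exists:
  fixes S :: "('a \<Rightarrow> ereal) set"
  assumes P: "prob_space M"
   and Sne: "S \<noteq> {}" and Smeas: "S \<subseteq> borel_measurable M"
   and dir: "\<forall>f\<in>S. \<forall>g\<in>S. \<exists>h\<in>S. AE x in M. h x \<le> f x \<and> h x \<le> g x"
  shows "\<exists>g. (\<forall>n. g n \<in> S) \<and> (AE x in M. decseq (\<lambda>n. g n x)) \<and>
             is_ess_inf M S (\<lambda>x. INF n. g n x)"
proof -
  interpret prob_space M by (rule P)
  define \<Phi> where "\<Phi> f = (\<integral>x. phi (f x) \<partial>M)" for f :: "'a \<Rightarrow> ereal"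
  have intg: "integrable M (\<lambda>x. phi (f x))" if "f \<in> borel_measurable M" for f
    by (rule integrable_const_bound[where B=2]) (use that phi_abs in auto)
  have lowb: "-2 \<le> \<Phi> f" if "f \<in> borel_measurable M" for f
  proof -
    have "(\<integral>x. -2 \<partial>M) \<le> \<Phi> f" unfolding \<Phi>_def
      by (rule integral_mono) (use intg[OF that] phi_bounds in auto)
    then show ?thesis by (simp add: prob_space)
  qed
  define m where "m = Inf (\<Phi> ` S)"
  have bdd: "bdd_below (\<Phi> ` S)"
  proof (rule bdd_belowI[where m="-2"])
    fix y assume "y \<in> \<Phi> ` S" then show "-2 \<le> y" using lowb Smeas by blast
  qed
  have mle: "m \<le> \<Phi> f" if "f \<in> S" for f unfolding m_def by (rule cInf_lower) (use that bdd in auto)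
  have "\<exists>f\<in>S. \<Phi> f < m + 1 / Suc n" for n
  proof -
    have "\<exists>y\<in>\<Phi> ` S. y < m + 1 / Suc n"
      by (rule cInf_lessD) (use Sne in \<open>simp_all add: m_def\<close>)
    then show ?thesis by blast
  qed
  then have "\<forall>n. \<exists>f. f \<in> S \<and> \<Phi> f < m + 1 / Suc n" by blast
  then have "\<exists>fs. \<forall>n. fs n \<in> S \<and> \<Phi> (fs n) < m + 1 / Suc n" by (rule choice)
  then obtain fs where fs0: "\<forall>n. fs n \<in> S \<and> \<Phi> (fs n) < m + 1 / Suc n" by blast
  have fs: "\<And>n. fs n \<in> S" "\<And>n. \<Phi> (fs n) < m + 1 / Suc n" using fs0 by auto
  define d where "d f g = (SOME h. h \<in> S \<and> (AE x in M. h x \<le> f x \<and> h x \<le> g x))" for f g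
  have d: "d f g \<in> S \<and> (AE x in M. d f g x \<le> f x \<and> d f g x \<le> g x)" if "f \<in> S" "g \<in> S" for f g
  proof -
    have "\<exists>h\<in>S. AE x in M. h x \<le> f x \<and> h x \<le> g x" using dir that by blast
    then have "\<exists>h. h \<in> S \<and> (AE x in M. h x \<le> f x \<and> h x \<le> g x)" by blast
    then show ?thesis unfolding d_def by (rule someI_ex)
  qed
  define g where "g = rec_nat (fs 0) (\<lambda>n gn. d gn (fs (Suc n)))"
  have g0: "g 0 = fs 0" and gS': "g (Suc n) = d (g n) (fs (Suc n))" for n by (simp_all add: g_def)
  have gS: "g n \<in> S" for n
  proof (induction n)
    case 0 then show ?case using fs(1)[of 0] by (simp add: g0)
  next
    case (Suc n) then show ?case using d[OF Suc.IH fs(1)[of "Suc n"]] by (simp add: gS')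
  qed
  have gdec: "AE x in M. g (Suc n) x \<le> g n x" for n
  proof -
    have "AE x in M. d (g n) (fs (Suc n)) x \<le> g n x \<and> d (g n) (fs (Suc n)) x \<le> fs (Suc n) x"
      using d[OF gS[of n] fs(1)[of "Suc n"]] by blast
    then show ?thesis by eventually_elim (simp add: gS')
  qed
  have gfs: "AE x in M. g n x \<le> fs n x" for n
  proof (cases n)
    case 0 then show ?thesis by (simp add: g0)
  next
    case (Suc k)
    have "AE x in M. d (g k) (fs (Suc k)) x \<le> g k x \<and> d (g k) (fs (Suc k)) x \<le> fs (Suc k) x"
      using d[OF gS[of k] fs(1)[of "Suc k"]] by blast
    then show ?thesis by eventually_elim (simp add: gS' Suc)
  qed
  have gmeas: "g n \<in> borel_measurable M" for n using gS Smeas by auto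
  have fsmeas: "fs n \<in> borel_measurable M" for n using fs(1) Smeas by auto
  have Phig: "\<Phi> (g n) < m + 1 / Suc n" for n
  proof -
    have "\<Phi> (g n) \<le> \<Phi> (fs n)" unfolding \<Phi>_def
      by (rule integral_mono_AE) (use intg[OF gmeas] intg[OF fsmeas] gfs[of n] phi_mono in auto)
    then show ?thesis using fs(2)[of n] by simp
  qed
  define gi where "gi = (\<lambda>x. INF n. g n x)"
  have gim: "gi \<in> borel_measurable M" unfolding gi_def using gmeas by measurable
  have gile: "gi x \<le> g n x" for x n unfolding gi_def by (rule INF_lower) auto
  have lower: "AE x in M. gi x \<le> f x" if fS: "f \<in> S" for f
  proof -
    have fm: "f \<in> borel_measurable M" using fS Smeas by auto
    define E where "E = {x \<in> space M. f x < gi x}"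
    have Em: "E \<in> sets M" unfolding E_def using fm gim by measurable
    define \<psi> where "\<psi> x = indicator E x * (phi (gi x) - phi (f x))" for x
    have \<psi>nn: "0 \<le> \<psi> x" for x
      unfolding \<psi>_def E_def using phi_strict[of "f x" "gi x"] by (auto simp: indicator_def)
    have \<psi>int: "integrable M \<psi>"
      using integrable_mult_indicator[OF Em Bochner_Integration.integrable_diff[OF intg[OF gim] intg[OF fm]]]
      unfolding \<psi>_def by simp
    have small: "integral\<^sup>L M \<psi> < 1 / Suc n" for n
    proof -
      define h where "h = d f (g n)"
      have hS: "h \<in> S" and hle: "AE x in M. h x \<le> f x \<and> h x \<le> g n x"
        using d[OF fS gS[of n]] by (auto simp: h_def)
      have hm: "h \<in> borel_measurable M" using hS Smeas by auto
      have "AE x in M. \<psi> x \<le> phi (g n x) - phi (h x)"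
        using hle
      proof eventually_elim
        case (elim x)
        show ?case
        proof (cases "x \<in> E")
          case True
          then have "f x < gi x" by (auto simp: E_def)
          then show ?thesis using elim phi_mono[of "h x" "f x"] phi_mono[of "gi x" "g n x"] gile[of x n]
            by (auto simp: \<psi>_def True)
        next
          case False
          then show ?thesis using elim phi_mono[of "h x" "g n x"] by (auto simp: \<psi>_def)
        qed
      qed
      then have "integral\<^sup>L M \<psi> \<le> (\<integral>x. phi (g n x) - phi (h x) \<partial>M)"
        by (intro integral_mono_AE \<psi>int Bochner_Integration.integrable_diff intg gmeas hm)
      also have "\<dots> = \<Phi> (g n) - \<Phi> h" unfolding \<Phi>_def
        by (rule Bochner_Integration.integral_diff) (use intg gmeas hm in auto)
      also have "\<dots> < 1 / Suc n" using Phig[of n] mle[OF hS] by simp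
      finally show ?thesis .
    qed
    have "integral\<^sup>L M \<psi> \<le> 0"
    proof (rule ccontr)
      assume "\<not> integral\<^sup>L M \<psi> \<le> 0"
      then obtain n where n: "0 < n" "inverse (real n) < integral\<^sup>L M \<psi>"
        using ex_inverse_of_nat_less[of "integral\<^sup>L M \<psi>"] by auto
      then have "Suc (n - 1) = n" by simp
      then show False using small[of "n - 1"] n(2) by (simp add: field_simps)
    qed
    moreover have "0 \<le> integral\<^sup>L M \<psi>" using \<psi>nn by simp
    ultimately have "integral\<^sup>L M \<psi> = 0" by simp
    then have "AE x in M. \<psi> x = 0" using integral_nonneg_eq_0_iff_AE[OF \<psi>int] \<psi>nn by simp
    then show ?thesis using AE_space
    proof eventually_elim
      case (elim x)
      show ?case
      proof (rule ccontr)
        assume "\<not> gi x \<le> f x"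
        then have "f x < gi x" by simp
        then have "x \<in> E" using elim by (simp add: E_def)
        then have "\<psi> x = phi (gi x) - phi (f x)" by (simp add: \<psi>_def)
        moreover have "phi (f x) < phi (gi x)" using \<open>f x < gi x\<close> by (rule phi_strict)
        ultimately show False using elim by simp
      qed
    qed
  qed
  have greatest: "AE x in M. Y x \<le> gi x"
    if "Y \<in> borel_measurable M" "\<forall>f\<in>S. AE x in M. Y x \<le> f x" for Y
  proof -
    have "\<forall>n. AE x in M. Y x \<le> g n x" using that gS by blast
    then have "AE x in M. \<forall>n. Y x \<le> g n x" by (simp add: AE_all_countable)
    then show ?thesis by eventually_elim (simp add: gi_def le_INF_iff)
  qed
  have "AE x in M. \<forall>n. g (Suc n) x \<le> g n x" using gdec by (simp add: AE_all_countable)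
  then have "AE x in M. decseq (\<lambda>n. g n x)" by eventually_elim (simp add: decseq_Suc_iff)
  moreover have "is_ess_inf M S gi"
    unfolding is_ess_inf_def using gim lower greatest by blast
  ultimately show ?thesis using gS unfolding gi_def by blast
qed


lemma ess_sup_exists:
  fixes S :: "('a \<Rightarrow> ereal) set"
  assumes P: "prob_space M"
   and Sne: "S \<noteq> {}" and Smeas: "S \<subseteq> borel_measurable M"
   and dir: "\<forall>f\<in>S. \<forall>g\<in>S. \<exists>h\<in>S. AE x in M. f x \<le> h x \<and> g x \<le> h x"
  shows "\<exists>g. (\<forall>n. g n \<in> S) \<and> (AE x in M. incseq (\<lambda>n. g n x)) \<and>
             is_ess_sup M S (\<lambda>x. SUP n. g n x)"
proof -
  interpret prob_space M by (rule P)
  define \<Phi> where "\<Phi> f = (\<integral>x. phi (f x) \<partial>M)" for f :: "'a \<Rightarrow> ereal"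
  have intg: "integrable M (\<lambda>x. phi (f x))" if "f \<in> borel_measurable M" for f
    by (rule integrable_const_bound[where B=2]) (use that phi_abs in auto)
  have lowb: "\<Phi> f \<le> 2" if "f \<in> borel_measurable M" for f
  proof -
    have "\<Phi> f \<le> (\<integral>x. 2 \<partial>M)" unfolding \<Phi>_def
      by (rule integral_mono) (use intg[OF that] phi_bounds in auto)
    then show ?thesis by (simp add: prob_space)
  qed
  define m where "m = Sup (\<Phi> ` S)"
  have bdd: "bdd_above (\<Phi> ` S)"
  proof (rule bdd_aboveI[where M="2"])
    fix y assume "y \<in> \<Phi> ` S" then show "y \<le> 2" using lowb Smeas by blast
  qed
  have mle: "\<Phi> f \<le> m" if "f \<in> S" for f unfolding m_def by (rule cSup_upper) (use that bdd in auto)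
  have "\<exists>f\<in>S. m - 1 / Suc n < \<Phi> f" for n
  proof -
    have "\<exists>y\<in>\<Phi> ` S. m - 1 / Suc n < y"
      by (rule less_cSupD) (use Sne in \<open>simp_all add: m_def\<close>)
    then show ?thesis by blast
  qed
  then have "\<forall>n. \<exists>f. f \<in> S \<and> m - 1 / Suc n < \<Phi> f" by blast
  then have "\<exists>fs. \<forall>n. fs n \<in> S \<and> m - 1 / Suc n < \<Phi> (fs n)" by (rule choice)
  then obtain fs where fs0: "\<forall>n. fs n \<in> S \<and> m - 1 / Suc n < \<Phi> (fs n)" by blast
  have fs: "\<And>n. fs n \<in> S" "\<And>n. m - 1 / Suc n < \<Phi> (fs n)" using fs0 by auto
  define d where "d f g = (SOME h. h \<in> S \<and> (AE x in M. f x \<le> h x \<and> g x \<le> h x))" for f g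
  have d: "d f g \<in> S \<and> (AE x in M. f x \<le> d f g x \<and> g x \<le> d f g x)" if "f \<in> S" "g \<in> S" for f g
  proof -
    have "\<exists>h\<in>S. AE x in M. f x \<le> h x \<and> g x \<le> h x" using dir that by blast
    then have "\<exists>h. h \<in> S \<and> (AE x in M. f x \<le> h x \<and> g x \<le> h x)" by blast
    then show ?thesis unfolding d_def by (rule someI_ex)
  qed
  define g where "g = rec_nat (fs 0) (\<lambda>n gn. d gn (fs (Suc n)))"
  have g0: "g 0 = fs 0" and gS': "g (Suc n) = d (g n) (fs (Suc n))" for n by (simp_all add: g_def)
  have gS: "g n \<in> S" for n
  proof (induction n)
    case 0 then show ?case using fs(1)[of 0] by (simp add: g0)
  next
    case (Suc n) then show ?case using d[OF Suc.IH fs(1)[of "Suc n"]] by (simp add: gS')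
  qed
  have gdec: "AE x in M. g n x \<le> g (Suc n) x" for n
  proof -
    have "AE x in M. g n x \<le> d (g n) (fs (Suc n)) x \<and> fs (Suc n) x \<le> d (g n) (fs (Suc n)) x"
      using d[OF gS[of n] fs(1)[of "Suc n"]] by blast
    then show ?thesis by eventually_elim (simp add: gS')
  qed
  have gfs: "AE x in M. fs n x \<le> g n x" for n
  proof (cases n)
    case 0 then show ?thesis by (simp add: g0)
  next
    case (Suc k)
    have "AE x in M. g k x \<le> d (g k) (fs (Suc k)) x \<and> fs (Suc k) x \<le> d (g k) (fs (Suc k)) x"
      using d[OF gS[of k] fs(1)[of "Suc k"]] by blast
    then show ?thesis by eventually_elim (simp add: gS' Suc)
  qed
  have gmeas: "g n \<in> borel_measurable M" for n using gS Smeas by auto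
  have fsmeas: "fs n \<in> borel_measurable M" for n using fs(1) Smeas by auto
  have Phig: "m - 1 / Suc n < \<Phi> (g n)" for n
  proof -
    have "\<Phi> (fs n) \<le> \<Phi> (g n)" unfolding \<Phi>_def
      by (rule integral_mono_AE) (use intg[OF gmeas] intg[OF fsmeas] gfs[of n] phi_mono in auto)
    then show ?thesis using fs(2)[of n] by simp
  qed
  define gi where "gi = (\<lambda>x. SUP n. g n x)"
  have gim: "gi \<in> borel_measurable M" unfolding gi_def using gmeas by measurable
  have gile: "g n x \<le> gi x" for x n unfolding gi_def by (rule SUP_upper) auto
  have lower: "AE x in M. f x \<le> gi x" if fS: "f \<in> S" for f
  proof -
    have fm: "f \<in> borel_measurable M" using fS Smeas by auto
    define E where "E = {x \<in> space M. gi x < f x}"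
    have Em: "E \<in> sets M" unfolding E_def using fm gim by measurable
    define \<psi> where "\<psi> x = indicator E x * (phi (f x) - phi (gi x))" for x
    have \<psi>nn: "0 \<le> \<psi> x" for x
      unfolding \<psi>_def E_def using phi_strict[of "gi x" "f x"] by (auto simp: indicator_def)
    have \<psi>int: "integrable M \<psi>"
      using integrable_mult_indicator[OF Em Bochner_Integration.integrable_diff[OF intg[OF fm] intg[OF gim]]]
      unfolding \<psi>_def by simp
    have small: "integral\<^sup>L M \<psi> < 1 / Suc n" for n
    proof -
      define h where "h = d f (g n)"
      have hS: "h \<in> S" and hle: "AE x in M. f x \<le> h x \<and> g n x \<le> h x"
        using d[OF fS gS[of n]] by (auto simp: h_def)
      have hm: "h \<in> borel_measurable M" using hS Smeas by auto
      have "AE x in M. \<psi> x \<le> phi (h x) - phi (g n x)"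
        using hle
      proof eventually_elim
        case (elim x)
        show ?case
        proof (cases "x \<in> E")
          case True
          then have "gi x < f x" by (auto simp: E_def)
          then show ?thesis using elim phi_mono[of "f x" "h x"] phi_mono[of "g n x" "gi x"] gile[of n x]
            by (auto simp: \<psi>_def True)
        next
          case False
          then show ?thesis using elim phi_mono[of "g n x" "h x"] by (auto simp: \<psi>_def)
        qed
      qed
      then have "integral\<^sup>L M \<psi> \<le> (\<integral>x. phi (h x) - phi (g n x) \<partial>M)"
        by (intro integral_mono_AE \<psi>int Bochner_Integration.integrable_diff intg gmeas hm)
      also have "\<dots> = \<Phi> h - \<Phi> (g n)" unfolding \<Phi>_def
        by (rule Bochner_Integration.integral_diff) (use intg gmeas hm in auto)
      also have "\<dots> < 1 / Suc n" using Phig[of n] mle[OF hS] by simp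
      finally show ?thesis .
    qed
    have "integral\<^sup>L M \<psi> \<le> 0"
    proof (rule ccontr)
      assume "\<not> integral\<^sup>L M \<psi> \<le> 0"
      then obtain n where n: "0 < n" "inverse (real n) < integral\<^sup>L M \<psi>"
        using ex_inverse_of_nat_less[of "integral\<^sup>L M \<psi>"] by auto
      then have "Suc (n - 1) = n" by simp
      then show False using small[of "n - 1"] n(2) by (simp add: field_simps)
    qed
    moreover have "0 \<le> integral\<^sup>L M \<psi>" using \<psi>nn by simp
    ultimately have "integral\<^sup>L M \<psi> = 0" by simp
    then have "AE x in M. \<psi> x = 0" using integral_nonneg_eq_0_iff_AE[OF \<psi>int] \<psi>nn by simp
    then show ?thesis using AE_space
    proof eventually_elim
      case (elim x)
      show ?case
      proof (rule ccontr)
        assume "\<not> f x \<le> gi x"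
        then have "gi x < f x" by simp
        then have "x \<in> E" using elim by (simp add: E_def)
        then have "\<psi> x = phi (f x) - phi (gi x)" by (simp add: \<psi>_def)
        moreover have "phi (gi x) < phi (f x)" using \<open>gi x < f x\<close> by (rule phi_strict)
        ultimately show False using elim by simp
      qed
    qed
  qed
  have greatest: "AE x in M. gi x \<le> Y x"
    if "Y \<in> borel_measurable M" "\<forall>f\<in>S. AE x in M. f x \<le> Y x" for Y
  proof -
    have "\<forall>n. AE x in M. g n x \<le> Y x" using that gS by blast
    then have "AE x in M. \<forall>n. g n x \<le> Y x" by (simp add: AE_all_countable)
    then show ?thesis by eventually_elim (simp add: gi_def SUP_le_iff)
  qed
  have "AE x in M. \<forall>n. g n x \<le> g (Suc n) x" using gdec by (simp add: AE_all_countable)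
  then have "AE x in M. incseq (\<lambda>n. g n x)" by eventually_elim (simp add: incseq_Suc_iff)
  moreover have "is_ess_sup M S gi"
    unfolding is_ess_sup_def using gim lower greatest by blast
  ultimately show ?thesis using gS unfolding gi_def by blast
qed

lemma ess_inf_unique:
  assumes "is_ess_inf M S Y1" "is_ess_inf M S Y2" shows "AE x in M. Y1 x = Y2 x"
proof -
  have "AE x in M. Y1 x \<le> Y2 x" using assms unfolding is_ess_inf_def by blast
  moreover have "AE x in M. Y2 x \<le> Y1 x" using assms unfolding is_ess_inf_def by blast
  ultimately show ?thesis by eventually_elim simp
qed

lemma ess_sup_unique:
  assumes "is_ess_sup M S Y1" "is_ess_sup M S Y2" shows "AE x in M. Y1 x = Y2 x"
proof -
  have "AE x in M. Y1 x \<le> Y2 x" using assms unfolding is_ess_sup_def by blast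
  moreover have "AE x in M. Y2 x \<le> Y1 x" using assms unfolding is_ess_sup_def by blast
  ultimately show ?thesis by eventually_elim simp
qed

lemma ess_inf_local:
  assumes Y1: "is_ess_inf M S1 Y1" and Y2: "is_ess_inf M S2 Y2" and A: "A \<in> sets M"
    and cmp: "\<forall>f\<in>S1. \<exists>g\<in>S2. AE x in M. x \<in> A \<longrightarrow> g x \<le> f x"
  shows "AE x in M. x \<in> A \<longrightarrow> Y2 x \<le> Y1 x"
proof -
  define Y' where "Y' x = (if x \<in> A then Y2 x else -\<infinity>)" for x
  have Y2m: "Y2 \<in> borel_measurable M" using Y2 unfolding is_ess_inf_def by blast
  have Y'm: "Y' \<in> borel_measurable M" unfolding Y'_def using Y2m A by measurable
  have "AE x in M. Y' x \<le> f x" if f: "f \<in> S1" for f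
  proof -
    obtain g where g: "g \<in> S2" "AE x in M. x \<in> A \<longrightarrow> g x \<le> f x" using cmp f by blast
    have "AE x in M. Y2 x \<le> g x" using Y2 g(1) unfolding is_ess_inf_def by blast
    with g(2) show ?thesis by eventually_elim (auto simp: Y'_def)
  qed
  then have "AE x in M. Y' x \<le> Y1 x" using Y1 Y'm unfolding is_ess_inf_def by blast
  then show ?thesis by eventually_elim (auto simp: Y'_def)
qed

lemma ess_sup_local:
  assumes Y1: "is_ess_sup M S1 Y1" and Y2: "is_ess_sup M S2 Y2" and A: "A \<in> sets M"
    and cmp: "\<forall>f\<in>S1. \<exists>g\<in>S2. AE x in M. x \<in> A \<longrightarrow> f x \<le> g x"
  shows "AE x in M. x \<in> A \<longrightarrow> Y1 x \<le> Y2 x"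
proof -
  define Y' where "Y' x = (if x \<in> A then Y2 x else \<infinity>)" for x
  have Y2m: "Y2 \<in> borel_measurable M" using Y2 unfolding is_ess_sup_def by blast
  have Y'm: "Y' \<in> borel_measurable M" unfolding Y'_def using Y2m A by measurable
  have "AE x in M. f x \<le> Y' x" if f: "f \<in> S1" for f
  proof -
    obtain g where g: "g \<in> S2" "AE x in M. x \<in> A \<longrightarrow> f x \<le> g x" using cmp f by blast
    have "AE x in M. g x \<le> Y2 x" using Y2 g(1) unfolding is_ess_sup_def by blast
    with g(2) show ?thesis by eventually_elim (auto simp: Y'_def)
  qed
  then have "AE x in M. Y1 x \<le> Y' x" using Y1 Y'm unfolding is_ess_sup_def by blast
  then show ?thesis by eventually_elim (auto simp: Y'_def)
qed

locale setting =
  fixes M G :: "'a measure" and LF LG :: "('a \<Rightarrow> real) set" and \<pi> :: "('a \<Rightarrow> real) \<Rightarrow> ('a \<Rightarrow> real)"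
  assumes P: "prob_space M"
    and Gs: "subalgebra M G"
    and LF: "vec_lattice M M LF"
    and LG: "vec_lattice M G LG"
    and dual: "vec_lattice M M (oc_dual M LF)"
    and nonempty: "oc_dual M LF \<inter> prob_densities M \<noteq> {}"
    and maps: "\<forall>X\<in>LF. \<pi> X \<in> LG"
    and REG: "\<forall>A\<in>sets G. \<forall>X\<in>LF. \<forall>Y\<in>LF.
       AE x in M. \<pi> (\<lambda>y. X y * indicator A y + Y y * indicator (space M - A) y) x
                  = \<pi> X x * indicator A x + \<pi> Y x * indicator (space M - A) x"
begin

interpretation prob_space M by (rule P)

abbreviation "DD \<equiv> oc_dual M LF \<inter> prob_densities M"

lemma sGM: "A \<in> sets G \<Longrightarrow> A \<in> sets M"
  using Gs unfolding subalgebra_def by blast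

lemma spaceG: "space G = space M"
  using Gs unfolding subalgebra_def by blast

lemma LFm: "X \<in> LF \<Longrightarrow> X \<in> borel_measurable M"
  using LF unfolding vec_lattice_def by blast

lemma LF_zero: "(\<lambda>_. 0) \<in> LF"
  using LF unfolding vec_lattice_def by blast

lemma LF_ind: "X \<in> LF \<Longrightarrow> A \<in> sets M \<Longrightarrow> (\<lambda>x. X x * indicator A x) \<in> LF"
  using LF unfolding vec_lattice_def by blast

lemma LF_add: "X \<in> LF \<Longrightarrow> Y \<in> LF \<Longrightarrow> (\<lambda>x. X x + Y x) \<in> LF"
  using LF unfolding vec_lattice_def by blast

lemma LF_comb: "X \<in> LF \<Longrightarrow> Y \<in> LF \<Longrightarrow> A \<in> sets M \<Longrightarrow>
   (\<lambda>y. X y * indicator A y + Y y * indicator (space M - A) y) \<in> LF"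
  by (intro LF_add LF_ind) auto

lemma piG: "X \<in> LF \<Longrightarrow> \<pi> X \<in> borel_measurable G"
  using maps LG unfolding vec_lattice_def by blast

lemma piM: "X \<in> LF \<Longrightarrow> \<pi> X \<in> borel_measurable M"
  using piG measurable_from_subalg[OF Gs] by blast

lemma DD_props:
  assumes "Z \<in> DD"
  shows "Z \<in> borel_measurable M" "AE x in M. 0 \<le> Z x" "integrable M Z"
    "\<And>X. X \<in> LF \<Longrightarrow> integrable M (\<lambda>x. Z x * X x)" "(\<integral>x. Z x \<partial>M) = 1"
  using assms unfolding oc_dual_def prob_densities_def by auto

lemma dual_ind: "Z \<in> oc_dual M LF \<Longrightarrow> A \<in> sets M \<Longrightarrow> (\<lambda>x. Z x * indicator A x) \<in> oc_dual M LF"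
  using dual unfolding vec_lattice_def by blast

lemma dual_add: "X \<in> oc_dual M LF \<Longrightarrow> Y \<in> oc_dual M LF \<Longrightarrow> (\<lambda>x. X x + Y x) \<in> oc_dual M LF"
  using dual unfolding vec_lattice_def by blast

lemma dual_cmult: "X \<in> oc_dual M LF \<Longrightarrow> (\<lambda>x. c * X x) \<in> oc_dual M LF"
  using dual unfolding vec_lattice_def by blast

lemma N_space: "space (dens_meas M Z) = space M" and N_sets: "sets (dens_meas M Z) = sets M"
  by (simp_all add: dens_meas_def)

lemma N_prob:
  assumes "Z \<in> DD" shows "prob_space (dens_meas M Z)"
proof
  have Zm: "(\<lambda>x. ennreal (Z x)) \<in> borel_measurable M" using DD_props(1)[OF assms] by measurable
  have "emeasure (dens_meas M Z) (space (dens_meas M Z)) = (\<integral>\<^sup>+x. ennreal (Z x) * indicator (space M) x \<partial>M)"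
    unfolding dens_meas_def by (simp add: emeasure_density[OF Zm])
  also have "\<dots> = (\<integral>\<^sup>+x. ennreal (Z x) \<partial>M)"
    by (rule nn_integral_cong) simp
  also have "\<dots> = ennreal (\<integral>x. Z x \<partial>M)"
    by (rule nn_integral_eq_integral) (use DD_props[OF assms] in auto)
  also have "\<dots> = 1" using DD_props[OF assms] by simp
  finally show "emeasure (dens_meas M Z) (space (dens_meas M Z)) = 1" .
qed

lemma N_sub:
  assumes "Z \<in> DD" shows "sigma_finite_subalgebra (dens_meas M Z) G"
proof -
  interpret Np: prob_space "dens_meas M Z" by (rule N_prob[OF assms])
  have "finite_measure_subalgebra (dens_meas M Z) G"
    by unfold_locales (use Gs in \<open>auto simp: subalgebra_def N_space N_sets\<close>)
  then show ?thesis by (rule finite_measure_subalgebra_is_sigma_finite)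
qed

lemma N_int:
  assumes Z: "Z \<in> DD" and f: "f \<in> borel_measurable M" and fi: "integrable M (\<lambda>x. Z x * f x)"
  shows "integrable (dens_meas M Z) f"
  unfolding dens_meas_def using integrable_density[of f M Z] f fi DD_props[OF Z] by simp

lemma N_setint:
  assumes Z: "Z \<in> DD" and f: "f \<in> borel_measurable M" and A: "A \<in> sets M"
  shows "set_lebesgue_integral (dens_meas M Z) A f = (\<integral>x. Z x * f x * indicator A x \<partial>M)"
proof -
  have "set_lebesgue_integral (dens_meas M Z) A f = (\<integral>x. Z x *\<^sub>R (indicator A x *\<^sub>R f x) \<partial>M)"
    unfolding set_lebesgue_integral_def dens_meas_def
    by (rule integral_density) (use f A DD_props[OF Z] in auto)
  also have "\<dots> = (\<integral>x. Z x * f x * indicator A x \<partial>M)"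
    by (rule Bochner_Integration.integral_cong) (auto simp: mult_ac)
  finally show ?thesis .
qed

definition feas :: "('a \<Rightarrow> real) \<Rightarrow> ('a \<Rightarrow> real) \<Rightarrow> ('a \<Rightarrow> real) \<Rightarrow> bool" where
  "feas Z X \<xi> \<longleftrightarrow> (\<forall>A\<in>sets G. 0 \<le> (\<integral>x. Z x * (\<xi> x - X x) * indicator A x \<partial>M))"

lemma feas_iff:
  assumes Z: "Z \<in> DD" and X: "X \<in> LF" and xi: "\<xi> \<in> LF"
  shows "(AE x in dens_meas M Z. real_cond_exp (dens_meas M Z) G \<xi> x
            \<ge> real_cond_exp (dens_meas M Z) G X x) \<longleftrightarrow> feas Z X \<xi>"
proof -
  let ?N = "dens_meas M Z"
  interpret S: sigma_finite_subalgebra ?N G by (rule N_sub[OF Z])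
  have Xm: "X \<in> borel_measurable M" and xim: "\<xi> \<in> borel_measurable M" using X xi LFm by auto
  have iX: "integrable ?N X" by (rule N_int[OF Z Xm DD_props(4)[OF Z X]])
  have ixi: "integrable ?N \<xi>" by (rule N_int[OF Z xim DD_props(4)[OF Z xi]])
  have idiff: "integrable ?N (\<lambda>x. \<xi> x - X x)" using iX ixi by auto
  have diffm: "(\<lambda>x. \<xi> x - X x) \<in> borel_measurable M" using Xm xim by measurable
  have conv: "set_lebesgue_integral ?N A (\<lambda>x. \<xi> x - X x) = (\<integral>x. Z x * (\<xi> x - X x) * indicator A x \<partial>M)"
    if "A \<in> sets G" for A
    by (rule N_setint[OF Z diffm sGM[OF that]])
  have rd: "AE x in ?N. real_cond_exp ?N G (\<lambda>x. \<xi> x - X x) x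
              = real_cond_exp ?N G \<xi> x - real_cond_exp ?N G X x"
    by (rule S.real_cond_exp_diff[OF ixi iX])
  have intA: "set_lebesgue_integral ?N A (\<lambda>x. \<xi> x - X x)
       = set_lebesgue_integral ?N A (real_cond_exp ?N G (\<lambda>x. \<xi> x - X x))" if "A \<in> sets G" for A
    by (rule S.real_cond_exp_intA[OF idiff that])
  let ?D = "real_cond_exp ?N G (\<lambda>x. \<xi> x - X x)"
  have iD: "integrable ?N ?D" by (rule S.real_cond_exp_int(1)[OF idiff])
  show ?thesis
  proof
    assume H: "AE x in ?N. real_cond_exp ?N G \<xi> x \<ge> real_cond_exp ?N G X x"
    have Dnn: "AE x in ?N. 0 \<le> ?D x" using H rd by eventually_elim simp
    show "feas Z X \<xi>" unfolding feas_def
    proof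
      fix A assume A: "A \<in> sets G"
      have "0 \<le> set_lebesgue_integral ?N A ?D"
        unfolding set_lebesgue_integral_def
        by (rule integral_nonneg_AE) (use Dnn in \<open>auto simp: indicator_def\<close>)
      then show "0 \<le> (\<integral>x. Z x * (\<xi> x - X x) * indicator A x \<partial>M)"
        using intA[OF A] conv[OF A] by simp
    qed
  next
    assume F: "feas Z X \<xi>"
    define A where "A = {x \<in> space M. ?D x < 0}"
    have AG: "A \<in> sets G"
    proof -
      have "?D \<in> borel_measurable G" by simp
      then have "{x \<in> space G. ?D x < 0} \<in> sets G" by measurable
      then show ?thesis by (simp add: A_def spaceG)
    qed
    have "0 \<le> (\<integral>x. Z x * (\<xi> x - X x) * indicator A x \<partial>M)" using F AG unfolding feas_def by blast
    then have "0 \<le> set_lebesgue_integral ?N A ?D" using intA[OF AG] conv[OF AG] by simp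
    then have a1: "0 \<le> (\<integral>x. indicator A x * ?D x \<partial>?N)"
      unfolding set_lebesgue_integral_def by simp
    have a2: "0 \<le> (\<integral>x. - (indicator A x * ?D x) \<partial>?N)"
      by (rule integral_nonneg_AE, rule AE_I2) (auto simp: A_def indicator_def N_space)
    have i0: "(\<integral>x. - (indicator A x * ?D x) \<partial>?N) = 0"
      using a1 a2 by simp
    have "integrable ?N (\<lambda>x. - (indicator A x * ?D x))"
      using integrable_mult_indicator[OF _ iD, of A] sGM[OF AG] by (simp add: N_sets)
    then have "AE x in ?N. - (indicator A x * ?D x) = 0"
      using integral_nonneg_eq_0_iff_AE i0 by (subst (asm) integral_nonneg_eq_0_iff_AE) (auto simp: A_def indicator_def)
    then have "AE x in ?N. 0 \<le> ?D x" using AE_space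
      by eventually_elim (auto simp: A_def indicator_def N_space split: if_splits)
    with rd show "AE x in ?N. real_cond_exp ?N G \<xi> x \<ge> real_cond_exp ?N G X x"
      by eventually_elim simp
  qed
qed

end

context setting
begin

interpretation prob_space M by (rule P)

definition Fam where
  "Fam Z X = {(\<lambda>x. ereal (\<pi> \<xi> x)) | \<xi>. \<xi> \<in> LF \<and>
        (AE x in dens_meas M Z. real_cond_exp (dens_meas M Z) G \<xi> x
                                 \<ge> real_cond_exp (dens_meas M Z) G X x)}"

lemma Kfun_Fam: "Kfun M G \<pi> LF X Z = ess_inf_fam M (Fam Z X)"
  unfolding Kfun_def Fam_def ..

lemma Fam_eq: "Z \<in> DD \<Longrightarrow> X \<in> LF \<Longrightarrow>
   Fam Z X = {(\<lambda>x. ereal (\<pi> \<xi> x)) | \<xi>. \<xi> \<in> LF \<and> feas Z X \<xi>}"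
  unfolding Fam_def using feas_iff by blast

lemma intZ:
  assumes "Z \<in> DD" "\<xi> \<in> LF" "X \<in> LF" "A \<in> sets M"
  shows "integrable M (\<lambda>x. Z x * (\<xi> x - X x) * indicator A x)"
proof -
  have "integrable M (\<lambda>x. Z x * \<xi> x - Z x * X x)"
    using DD_props(4)[OF assms(1) assms(2)] DD_props(4)[OF assms(1) assms(3)] by auto
  then have "integrable M (\<lambda>x. Z x * (\<xi> x - X x))" by (simp add: right_diff_distrib)
  from integrable_mult_indicator[OF assms(4) this] show ?thesis by (simp add: mult_ac)
qed

lemma feas_refl: "feas Z X X"
  unfolding feas_def by auto

lemma REG_on:
  assumes B: "B \<in> sets G" and xi: "\<xi> \<in> LF" and Y: "Y \<in> LF"
  shows "AE x in M. (x \<in> B \<longrightarrow> \<pi> (\<lambda>y. \<xi> y * indicator B y + Y y * indicator (space M - B) y) x = \<pi> \<xi> x)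
                 \<and> (x \<in> space M - B \<longrightarrow> \<pi> (\<lambda>y. \<xi> y * indicator B y + Y y * indicator (space M - B) y) x = \<pi> Y x)"
proof -
  have "AE x in M. \<pi> (\<lambda>y. \<xi> y * indicator B y + Y y * indicator (space M - B) y) x
      = \<pi> \<xi> x * indicator B x + \<pi> Y x * indicator (space M - B) x"
    using REG B xi Y by blast
  then show ?thesis by eventually_elim (auto simp: indicator_def)
qed

lemma feas_comb:
  assumes Z: "Z \<in> DD" and X: "X \<in> LF" and x1: "\<xi>1 \<in> LF" and x2: "\<xi>2 \<in> LF" and B: "B \<in> sets G"
    and f1: "feas Z X \<xi>1" and f2: "feas Z X \<xi>2"
  shows "feas Z X (\<lambda>y. \<xi>1 y * indicator B y + \<xi>2 y * indicator (space M - B) y)"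
  unfolding feas_def
proof
  fix A assume A: "A \<in> sets G"
  have AB: "A \<inter> B \<in> sets G" and AB': "A \<inter> (space M - B) \<in> sets G"
    using A B spaceG by (auto simp flip: spaceG)
  have "(\<integral>x. Z x * ((\<xi>1 x * indicator B x + \<xi>2 x * indicator (space M - B) x) - X x) * indicator A x \<partial>M)
     = (\<integral>x. Z x * (\<xi>1 x - X x) * indicator (A \<inter> B) x + Z x * (\<xi>2 x - X x) * indicator (A \<inter> (space M - B)) x \<partial>M)"
    by (rule Bochner_Integration.integral_cong) (auto simp: indicator_def algebra_simps)
  also have "\<dots> = (\<integral>x. Z x * (\<xi>1 x - X x) * indicator (A \<inter> B) x \<partial>M) +
                  (\<integral>x. Z x * (\<xi>2 x - X x) * indicator (A \<inter> (space M - B)) x \<partial>M)"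
    by (rule Bochner_Integration.integral_add) (intro intZ Z x1 x2 X sGM AB AB')+
  also have "0 \<le> \<dots>" using f1 f2 AB AB' unfolding feas_def by (simp add: add_nonneg_nonneg)
  finally show "0 \<le> (\<integral>x. Z x * ((\<xi>1 x * indicator B x + \<xi>2 x * indicator (space M - B) x) - X x) * indicator A x \<partial>M)"
    by simp
qed

end

context setting
begin

interpretation prob_space M by (rule P)

lemma setG: "(\<lambda>x. \<pi> \<xi>1 x \<le> \<pi> \<xi>2 x) = (\<lambda>x. \<pi> \<xi>1 x \<le> \<pi> \<xi>2 x)" ..

lemma le_set_G:
  assumes "f \<in> borel_measurable G" "g \<in> borel_measurable G"
  shows "{x \<in> space M. f x \<le> (g x :: real)} \<in> sets G"
proof -
  have "{x \<in> space G. f x \<le> g x} \<in> sets G" using assms by measurable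
  then show ?thesis by (simp add: spaceG)
qed

lemma le_set_G':
  assumes "f \<in> borel_measurable G" "g \<in> borel_measurable G"
  shows "{x \<in> space M. f x \<le> (g x :: ereal)} \<in> sets G"
proof -
  have "{x \<in> space G. f x \<le> g x} \<in> sets G" using assms by measurable
  then show ?thesis by (simp add: spaceG)
qed

lemma Fam_mem: "Z \<in> DD \<Longrightarrow> X \<in> LF \<Longrightarrow> \<xi> \<in> LF \<Longrightarrow> feas Z X \<xi> \<Longrightarrow> (\<lambda>x. ereal (\<pi> \<xi> x)) \<in> Fam Z X"
  using Fam_eq by blast

lemma Fam_elim: "Z \<in> DD \<Longrightarrow> X \<in> LF \<Longrightarrow> f \<in> Fam Z X \<Longrightarrow> \<exists>\<xi>. f = (\<lambda>x. ereal (\<pi> \<xi> x)) \<and> \<xi> \<in> LF \<and> feas Z X \<xi>"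
  using Fam_eq by blast

lemma K_exists:
  assumes Z: "Z \<in> DD" and X: "X \<in> LF"
  shows "\<exists>g. (\<forall>n. g n \<in> Fam Z X) \<and> (AE x in M. decseq (\<lambda>n. g n x)) \<and>
             is_ess_inf M (Fam Z X) (\<lambda>x. INF n. g n x) \<and> (\<lambda>x. INF n. g n x) \<in> borel_measurable G"
proof -
  have ne: "Fam Z X \<noteq> {}" using Fam_mem[OF Z X X feas_refl] by blast
  have meas: "Fam Z X \<subseteq> borel_measurable M"
  proof
    fix f assume "f \<in> Fam Z X"
    then obtain \<xi> where "f = (\<lambda>x. ereal (\<pi> \<xi> x))" "\<xi> \<in> LF" using Fam_elim[OF Z X] by blast
    then show "f \<in> borel_measurable M" using piM by simp
  qed
  have dir: "\<forall>f\<in>Fam Z X. \<forall>g\<in>Fam Z X. \<exists>h\<in>Fam Z X. AE x in M. h x \<le> f x \<and> h x \<le> g x"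
  proof (intro ballI)
    fix f1 f2 assume "f1 \<in> Fam Z X" "f2 \<in> Fam Z X"
    obtain \<xi>1 where x1: "f1 = (\<lambda>x. ereal (\<pi> \<xi>1 x))" "\<xi>1 \<in> LF" "feas Z X \<xi>1"
      using Fam_elim[OF Z X \<open>f1 \<in> Fam Z X\<close>] by blast
    obtain \<xi>2 where x2: "f2 = (\<lambda>x. ereal (\<pi> \<xi>2 x))" "\<xi>2 \<in> LF" "feas Z X \<xi>2"
      using Fam_elim[OF Z X \<open>f2 \<in> Fam Z X\<close>] by blast
    define B where "B = {x \<in> space M. \<pi> \<xi>1 x \<le> \<pi> \<xi>2 x}"
    have B: "B \<in> sets G" unfolding B_def by (rule le_set_G) (use piG x1 x2 in auto)
    define \<xi> where "\<xi> = (\<lambda>y. \<xi>1 y * indicator B y + \<xi>2 y * indicator (space M - B) y)"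
    have xi: "\<xi> \<in> LF" unfolding \<xi>_def by (rule LF_comb) (use x1 x2 sGM[OF B] in auto)
    have fx: "feas Z X \<xi>" unfolding \<xi>_def by (rule feas_comb) (use Z X x1 x2 B in auto)
    have R: "AE x in M. (x \<in> B \<longrightarrow> \<pi> \<xi> x = \<pi> \<xi>1 x) \<and> (x \<in> space M - B \<longrightarrow> \<pi> \<xi> x = \<pi> \<xi>2 x)"
      using REG_on[OF B x1(2) x2(2)] unfolding \<xi>_def .
    have "AE x in M. ereal (\<pi> \<xi> x) \<le> f1 x \<and> ereal (\<pi> \<xi> x) \<le> f2 x"
      using R AE_space
    proof eventually_elim
      case (elim x)
      show ?case
      proof (cases "x \<in> B")
        case True
        then have "\<pi> \<xi>1 x \<le> \<pi> \<xi>2 x" by (simp add: B_def)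
        then show ?thesis using elim True unfolding x1(1) x2(1) by simp
      next
        case False
        then have "\<not> \<pi> \<xi>1 x \<le> \<pi> \<xi>2 x" using elim by (simp add: B_def)
        then show ?thesis using elim False unfolding x1(1) x2(1) by simp
      qed
    qed
    moreover have "(\<lambda>x. ereal (\<pi> \<xi> x)) \<in> Fam Z X" by (rule Fam_mem[OF Z X xi fx])
    ultimately show "\<exists>h\<in>Fam Z X. AE x in M. h x \<le> f1 x \<and> h x \<le> f2 x"
      by (rule bexI[where x="\<lambda>x. ereal (\<pi> \<xi> x)"])
  qed
  obtain g where g: "\<forall>n. g n \<in> Fam Z X" "AE x in M. decseq (\<lambda>n. g n x)"
      "is_ess_inf M (Fam Z X) (\<lambda>x. INF n. g n x)"
    using ess_inf_exists[OF P ne meas dir] by blast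
  have "g n \<in> borel_measurable G" for n
  proof -
    have "g n \<in> Fam Z X" using g(1) by blast
    then obtain \<xi> where "g n = (\<lambda>x. ereal (\<pi> \<xi> x))" "\<xi> \<in> LF" using Fam_elim[OF Z X] by blast
    then show ?thesis using piG by simp
  qed
  then have "(\<lambda>x. INF n. g n x) \<in> borel_measurable G" by measurable
  with g show ?thesis by blast
qed

lemma K_is:
  assumes Z: "Z \<in> DD" and X: "X \<in> LF"
  shows "is_ess_inf M (Fam Z X) (Kfun M G \<pi> LF X Z)"
proof -
  have "\<exists>Y. is_ess_inf M (Fam Z X) Y" using K_exists[OF Z X] by blast
  then show ?thesis unfolding Kfun_Fam ess_inf_fam_def by (rule someI_ex)
qed

end

context setting
begin

interpretation prob_space M by (rule P)

lemma K_local: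
  assumes Z: "Z \<in> DD" and Z': "Z' \<in> DD" and X: "X \<in> LF" and B: "B \<in> sets G" and c: "0 \<le> c"
   and eq: "AE x in M. Z' x * indicator B x = c * (Z x * indicator B x)"
  shows "AE x in M. x \<in> B \<longrightarrow> Kfun M G \<pi> LF X Z' x \<le> Kfun M G \<pi> LF X Z x"
proof -
  have "\<forall>f\<in>Fam Z X. \<exists>g\<in>Fam Z' X. AE x in M. x \<in> B \<longrightarrow> g x \<le> f x"
  proof
    fix f assume fF: "f \<in> Fam Z X"
    obtain \<xi> where xi: "f = (\<lambda>x. ereal (\<pi> \<xi> x))" "\<xi> \<in> LF" "feas Z X \<xi>"
      using Fam_elim[OF Z X fF] by blast
    define \<xi>' where "\<xi>' = (\<lambda>y. \<xi> y * indicator B y + X y * indicator (space M - B) y)"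
    have xi'LF: "\<xi>' \<in> LF" unfolding \<xi>'_def by (rule LF_comb[OF xi(2) X sGM[OF B]])
    have Zm: "Z \<in> borel_measurable M" "Z' \<in> borel_measurable M" using DD_props(1) Z Z' by auto
    have Xm: "X \<in> borel_measurable M" "\<xi> \<in> borel_measurable M" "\<xi>' \<in> borel_measurable M"
      using LFm X xi(2) xi'LF by auto
    have Bm: "B \<in> sets M" by (rule sGM[OF B])
    have feas': "feas Z' X \<xi>'" unfolding feas_def
    proof
      fix A assume A: "A \<in> sets G"
      have AB: "A \<inter> B \<in> sets G" using A B by auto
      have Am: "A \<in> sets M" by (rule sGM[OF A])
      have "(\<integral>x. Z' x * (\<xi>' x - X x) * indicator A x \<partial>M)
          = (\<integral>x. c * (Z x * (\<xi> x - X x) * indicator (A \<inter> B) x) \<partial>M)"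
      proof (rule integral_cong_AE)
        show "(\<lambda>x. Z' x * (\<xi>' x - X x) * indicator A x) \<in> borel_measurable M"
          using Zm Xm Am by measurable
        show "(\<lambda>x. c * (Z x * (\<xi> x - X x) * indicator (A \<inter> B) x)) \<in> borel_measurable M"
          using Zm Xm Am Bm by measurable
        show "AE x in M. Z' x * (\<xi>' x - X x) * indicator A x = c * (Z x * (\<xi> x - X x) * indicator (A \<inter> B) x)"
          using eq AE_space
        proof eventually_elim
          case (elim x)
          show ?case
          proof (cases "x \<in> B")
            case True
            then have "Z' x = c * Z x" using elim by simp
            then show ?thesis using True elim by (simp add: \<xi>'_def indicator_def)
          next
            case False
            then show ?thesis using elim by (simp add: \<xi>'_def indicator_def)
          qed
        qed
      qed
      also have "\<dots> = c * (\<integral>x. Z x * (\<xi> x - X x) * indicator (A \<inter> B) x \<partial>M)" by simp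
      also have "0 \<le> \<dots>" using xi(3) AB c unfolding feas_def by simp
      finally show "0 \<le> (\<integral>x. Z' x * (\<xi>' x - X x) * indicator A x \<partial>M)" .
    qed
    have R: "AE x in M. (x \<in> B \<longrightarrow> \<pi> \<xi>' x = \<pi> \<xi> x)"
      using REG_on[OF B xi(2) X] unfolding \<xi>'_def by eventually_elim simp
    have "AE x in M. x \<in> B \<longrightarrow> ereal (\<pi> \<xi>' x) \<le> f x"
      using R by eventually_elim (simp add: xi(1))
    moreover have "(\<lambda>x. ereal (\<pi> \<xi>' x)) \<in> Fam Z' X" by (rule Fam_mem[OF Z' X xi'LF feas'])
    ultimately show "\<exists>g\<in>Fam Z' X. AE x in M. x \<in> B \<longrightarrow> g x \<le> f x"
      by (rule bexI[where x="\<lambda>x. ereal (\<pi> \<xi>' x)"])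
  qed
  then show ?thesis by (rule ess_inf_local[OF K_is[OF Z X] K_is[OF Z' X] sGM[OF B]])
qed

end

context setting
begin

interpretation prob_space M by (rule P)

lemma K_mono:
  assumes Z: "Z \<in> DD" and X: "X \<in> LF" and Y: "Y \<in> LF" and le: "AE x in M. X x \<le> Y x"
  shows "AE x in M. Kfun M G \<pi> LF X Z x \<le> Kfun M G \<pi> LF Y Z x"
proof -
  have "\<forall>f\<in>Fam Z Y. \<exists>g\<in>Fam Z X. AE x in M. x \<in> space M \<longrightarrow> g x \<le> f x"
  proof
    fix f assume fF: "f \<in> Fam Z Y"
    obtain \<xi> where xi: "f = (\<lambda>x. ereal (\<pi> \<xi> x))" "\<xi> \<in> LF" "feas Z Y \<xi>"
      using Fam_elim[OF Z Y fF] by blast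
    have "feas Z X \<xi>" unfolding feas_def
    proof
      fix A assume A: "A \<in> sets G"
      have "0 \<le> (\<integral>x. Z x * (\<xi> x - Y x) * indicator A x \<partial>M)" using xi(3) A unfolding feas_def by blast
      also have "\<dots> \<le> (\<integral>x. Z x * (\<xi> x - X x) * indicator A x \<partial>M)"
      proof (rule integral_mono_AE)
        show "integrable M (\<lambda>x. Z x * (\<xi> x - Y x) * indicator A x)" by (rule intZ[OF Z xi(2) Y sGM[OF A]])
        show "integrable M (\<lambda>x. Z x * (\<xi> x - X x) * indicator A x)" by (rule intZ[OF Z xi(2) X sGM[OF A]])
        show "AE x in M. Z x * (\<xi> x - Y x) * indicator A x \<le> Z x * (\<xi> x - X x) * indicator A x"
          using le DD_props(2)[OF Z]
        proof eventually_elim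
          case (elim x)
          then have "Z x * (\<xi> x - Y x) \<le> Z x * (\<xi> x - X x)" by (intro mult_left_mono) auto
          then show ?case by (auto simp: indicator_def)
        qed
      qed
      finally show "0 \<le> (\<integral>x. Z x * (\<xi> x - X x) * indicator A x \<partial>M)" .
    qed
    then have fX: "f \<in> Fam Z X" unfolding xi(1) by (rule Fam_mem[OF Z X xi(2)])
    have "AE x in M. x \<in> space M \<longrightarrow> f x \<le> f x" by simp
    then show "\<exists>g\<in>Fam Z X. AE x in M. x \<in> space M \<longrightarrow> g x \<le> f x" using fX by (rule bexI[where x=f])
  qed
  then have "AE x in M. x \<in> space M \<longrightarrow> Kfun M G \<pi> LF X Z x \<le> Kfun M G \<pi> LF Y Z x"
    by (rule ess_inf_local[OF K_is[OF Z Y] K_is[OF Z X] sets.top])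
  then show ?thesis using AE_space by eventually_elim simp
qed

lemma K_restr:
  assumes Z: "Z \<in> DD" and X: "X \<in> LF" and A: "A \<in> sets G"
  shows "AE x in M. x \<in> A \<longrightarrow> Kfun M G \<pi> LF (\<lambda>y. X y * indicator A y) Z x = Kfun M G \<pi> LF X Z x"
proof -
  define XA where "XA = (\<lambda>y. X y * indicator A y)"
  have Am: "A \<in> sets M" by (rule sGM[OF A])
  have XA: "XA \<in> LF" unfolding XA_def by (rule LF_ind[OF X Am])
  have "\<forall>f\<in>Fam Z XA. \<exists>g\<in>Fam Z X. AE x in M. x \<in> A \<longrightarrow> g x \<le> f x"
  proof
    fix f assume fF: "f \<in> Fam Z XA"
    obtain \<xi> where xi: "f = (\<lambda>x. ereal (\<pi> \<xi> x))" "\<xi> \<in> LF" "feas Z XA \<xi>"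
      using Fam_elim[OF Z XA fF] by blast
    define \<xi>' where "\<xi>' = (\<lambda>y. \<xi> y * indicator A y + X y * indicator (space M - A) y)"
    have xi'LF: "\<xi>' \<in> LF" unfolding \<xi>'_def by (rule LF_comb[OF xi(2) X Am])
    have feas': "feas Z X \<xi>'" unfolding feas_def
    proof
      fix C assume C: "C \<in> sets G"
      have CA: "C \<inter> A \<in> sets G" using A C by auto
      have "(\<integral>x. Z x * (\<xi>' x - X x) * indicator C x \<partial>M)
          = (\<integral>x. Z x * (\<xi> x - XA x) * indicator (C \<inter> A) x \<partial>M)"
        by (rule Bochner_Integration.integral_cong) (auto simp: \<xi>'_def XA_def indicator_def)
      also have "0 \<le> \<dots>" using xi(3) CA unfolding feas_def by blast
      finally show "0 \<le> (\<integral>x. Z x * (\<xi>' x - X x) * indicator C x \<partial>M)" by simp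
    qed
    have R: "AE x in M. (x \<in> A \<longrightarrow> \<pi> \<xi>' x = \<pi> \<xi> x)"
      using REG_on[OF A xi(2) X] unfolding \<xi>'_def by eventually_elim simp
    have "AE x in M. x \<in> A \<longrightarrow> ereal (\<pi> \<xi>' x) \<le> f x"
      using R by eventually_elim (simp add: xi(1))
    moreover have "(\<lambda>x. ereal (\<pi> \<xi>' x)) \<in> Fam Z X" by (rule Fam_mem[OF Z X xi'LF feas'])
    ultimately show "\<exists>g\<in>Fam Z X. AE x in M. x \<in> A \<longrightarrow> g x \<le> f x"
      by (rule bexI[where x="\<lambda>x. ereal (\<pi> \<xi>' x)"])
  qed
  then have a: "AE x in M. x \<in> A \<longrightarrow> Kfun M G \<pi> LF X Z x \<le> Kfun M G \<pi> LF XA Z x"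
    by (rule ess_inf_local[OF K_is[OF Z XA] K_is[OF Z X] Am])
  have "\<forall>f\<in>Fam Z X. \<exists>g\<in>Fam Z XA. AE x in M. x \<in> A \<longrightarrow> g x \<le> f x"
  proof
    fix f assume fF: "f \<in> Fam Z X"
    obtain \<xi> where xi: "f = (\<lambda>x. ereal (\<pi> \<xi> x))" "\<xi> \<in> LF" "feas Z X \<xi>"
      using Fam_elim[OF Z X fF] by blast
    define \<xi>' where "\<xi>' = (\<lambda>y. \<xi> y * indicator A y)"
    have xi'LF: "\<xi>' \<in> LF" unfolding \<xi>'_def by (rule LF_ind[OF xi(2) Am])
    have feas': "feas Z XA \<xi>'" unfolding feas_def
    proof
      fix C assume C: "C \<in> sets G"
      have CA: "C \<inter> A \<in> sets G" using A C by auto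
      have "(\<integral>x. Z x * (\<xi>' x - XA x) * indicator C x \<partial>M)
          = (\<integral>x. Z x * (\<xi> x - X x) * indicator (C \<inter> A) x \<partial>M)"
        by (rule Bochner_Integration.integral_cong) (auto simp: \<xi>'_def XA_def indicator_def)
      also have "0 \<le> \<dots>" using xi(3) CA unfolding feas_def by blast
      finally show "0 \<le> (\<integral>x. Z x * (\<xi>' x - XA x) * indicator C x \<partial>M)" by simp
    qed
    have R: "AE x in M. (x \<in> A \<longrightarrow> \<pi> \<xi>' x = \<pi> \<xi> x)"
      using REG_on[OF A xi(2) LF_zero] unfolding \<xi>'_def by eventually_elim simp
    have "AE x in M. x \<in> A \<longrightarrow> ereal (\<pi> \<xi>' x) \<le> f x"
      using R by eventually_elim (simp add: xi(1))
    moreover have "(\<lambda>x. ereal (\<pi> \<xi>' x)) \<in> Fam Z XA" by (rule Fam_mem[OF Z XA xi'LF feas'])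
    ultimately show "\<exists>g\<in>Fam Z XA. AE x in M. x \<in> A \<longrightarrow> g x \<le> f x"
      by (rule bexI[where x="\<lambda>x. ereal (\<pi> \<xi>' x)"])
  qed
  then have b: "AE x in M. x \<in> A \<longrightarrow> Kfun M G \<pi> LF XA Z x \<le> Kfun M G \<pi> LF X Z x"
    by (rule ess_inf_local[OF K_is[OF Z X] K_is[OF Z XA] Am])
  from a b show ?thesis unfolding XA_def by eventually_elim (auto intro: antisym)
qed

end

context setting
begin

interpretation prob_space M by (rule P)

lemma K_Gversion:
  assumes Z: "Z \<in> DD" and X: "X \<in> LF"
  shows "\<exists>k. k \<in> borel_measurable G \<and> (AE x in M. k x = Kfun M G \<pi> LF X Z x)"
proof -
  obtain g :: "nat \<Rightarrow> 'a \<Rightarrow> ereal" where g: "is_ess_inf M (Fam Z X) (\<lambda>x. INF n. g n x)" "(\<lambda>x. INF n. g n x) \<in> borel_measurable G"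
    using K_exists[OF Z X] by blast
  have "AE x in M. (INF n. g n x) = Kfun M G \<pi> LF X Z x" by (rule ess_inf_unique[OF g(1) K_is[OF Z X]])
  with g(2) show ?thesis by blast
qed

lemma DD_comb:
  assumes Z1: "Z1 \<in> DD" and Z2: "Z2 \<in> DD" and B: "B \<in> sets G"
  shows "\<exists>Z\<in>DD. \<exists>c\<ge>0. (AE x in M. Z1 x * indicator B x = c * (Z x * indicator B x)) \<and>
        (AE x in M. Z2 x * indicator (space M - B) x = c * (Z x * indicator (space M - B) x))"
proof -
  have Bm: "B \<in> sets M" by (rule sGM[OF B])
  have Bm': "space M - B \<in> sets M" using Bm by auto
  note P1 = DD_props[OF Z1] and P2 = DD_props[OF Z2]
  have i1: "integrable M (\<lambda>x. Z1 x * indicator B x)"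
    using integrable_mult_indicator[OF Bm P1(3)] by (simp add: mult.commute)
  have i2: "integrable M (\<lambda>x. Z2 x * indicator (space M - B) x)"
    using integrable_mult_indicator[OF Bm' P2(3)] by (simp add: mult.commute)
  define a where "a = (\<integral>x. Z1 x * indicator B x \<partial>M)"
  define b where "b = (\<integral>x. Z2 x * indicator (space M - B) x \<partial>M)"
  have a0: "0 \<le> a" unfolding a_def
    by (rule integral_nonneg_AE) (use P1(2) in \<open>auto elim!: eventually_mono simp: indicator_def\<close>)
  have b0: "0 \<le> b" unfolding b_def
    by (rule integral_nonneg_AE) (use P2(2) in \<open>auto elim!: eventually_mono simp: indicator_def\<close>)
  show ?thesis
  proof (cases "a + b = 0")
    case True
    then have "a = 0" "b = 0" using a0 b0 by auto
    have "AE x in M. Z1 x * indicator B x = 0"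
      using \<open>a = 0\<close> unfolding a_def
      by (subst (asm) integral_nonneg_eq_0_iff_AE[OF i1]) (use P1(2) in \<open>auto elim!: eventually_mono simp: indicator_def\<close>)
    moreover have "AE x in M. Z2 x * indicator (space M - B) x = 0"
      using \<open>b = 0\<close> unfolding b_def
      by (subst (asm) integral_nonneg_eq_0_iff_AE[OF i2]) (use P2(2) in \<open>auto elim!: eventually_mono simp: indicator_def\<close>)
    ultimately show ?thesis using Z1 by (intro bexI[where x=Z1] exI[where x=0]) auto
  next
    case False
    define c where "c = a + b"
    have c0: "0 < c" using False a0 b0 by (simp add: c_def)
    define Z where "Z x = (1 / c) * (Z1 x * indicator B x + Z2 x * indicator (space M - B) x)" for x
    have Zd: "Z \<in> oc_dual M LF"
      unfolding Z_def using Z1 Z2 Bm Bm' by (intro dual_cmult dual_add dual_ind) auto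
    have "Z \<in> prob_densities M" unfolding prob_densities_def
    proof (intro CollectI conjI)
      show "Z \<in> borel_measurable M" unfolding Z_def using P1(1) P2(1) Bm Bm' by measurable
      show "AE x in M. 0 \<le> Z x" using P1(2) P2(2)
        by eventually_elim (use c0 in \<open>auto simp: Z_def indicator_def\<close>)
      have "(\<integral>x. Z x \<partial>M) = (1 / c) * (a + b)"
        unfolding Z_def a_def b_def by (simp add: Bochner_Integration.integral_add[OF i1 i2])
      then show "(\<integral>x. Z x \<partial>M) = 1" using c0 by (simp add: c_def)
    qed
    with Zd have ZD: "Z \<in> DD" by blast
    have e1: "Z1 x * indicator B x = c * (Z x * indicator B x)" for x
      using c0 by (auto simp: Z_def indicator_def)
    have e2: "Z2 x * indicator (space M - B) x = c * (Z x * indicator (space M - B) x)" for x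
      using c0 by (auto simp: Z_def indicator_def)
    show ?thesis using ZD c0 e1 e2 by (intro bexI[where x=Z] exI[where x=c]) auto
  qed
qed

lemma H_dir:
  assumes Z1: "Z1 \<in> DD" and Z2: "Z2 \<in> DD" and X: "X \<in> LF"
  shows "\<exists>Z\<in>DD. AE x in M. Kfun M G \<pi> LF X Z1 x \<le> Kfun M G \<pi> LF X Z x \<and>
                           Kfun M G \<pi> LF X Z2 x \<le> Kfun M G \<pi> LF X Z x"
proof -
  obtain k1 where k1: "k1 \<in> borel_measurable G" "AE x in M. k1 x = Kfun M G \<pi> LF X Z1 x"
    using K_Gversion[OF Z1 X] by blast
  obtain k2 where k2: "k2 \<in> borel_measurable G" "AE x in M. k2 x = Kfun M G \<pi> LF X Z2 x"
    using K_Gversion[OF Z2 X] by blast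
  define B where "B = {x \<in> space M. k2 x \<le> k1 x}"
  have B: "B \<in> sets G" unfolding B_def by (rule le_set_G'[OF k2(1) k1(1)])
  have B': "space M - B \<in> sets G"
  proof -
    have "space G - B \<in> sets G" using B by auto
    then show ?thesis by (simp add: spaceG)
  qed
  obtain Z c where ZD: "Z \<in> DD" and c: "0 \<le> c"
    and e1: "AE x in M. Z1 x * indicator B x = c * (Z x * indicator B x)"
    and e2: "AE x in M. Z2 x * indicator (space M - B) x = c * (Z x * indicator (space M - B) x)"
    using DD_comb[OF Z1 Z2 B] by blast
  have l1: "AE x in M. x \<in> B \<longrightarrow> Kfun M G \<pi> LF X Z1 x \<le> Kfun M G \<pi> LF X Z x"
    by (rule K_local[OF ZD Z1 X B c e1])
  have l2: "AE x in M. x \<in> space M - B \<longrightarrow> Kfun M G \<pi> LF X Z2 x \<le> Kfun M G \<pi> LF X Z x"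
    by (rule K_local[OF ZD Z2 X B' c e2])
  have "AE x in M. Kfun M G \<pi> LF X Z1 x \<le> Kfun M G \<pi> LF X Z x \<and>
                   Kfun M G \<pi> LF X Z2 x \<le> Kfun M G \<pi> LF X Z x"
    using l1 l2 k1(2) k2(2) AE_space
  proof eventually_elim
    case (elim x)
    show ?case
    proof (cases "x \<in> B")
      case True
      then have "k2 x \<le> k1 x" by (simp add: B_def)
      then show ?thesis using elim True by auto
    next
      case False
      then have "k1 x \<le> k2 x" using elim by (auto simp: B_def)
      then show ?thesis using elim False by auto
    qed
  qed
  then show ?thesis using ZD by (intro bexI[where x=Z])
qed

end

context setting
begin

interpretation prob_space M by (rule P)

definition HFam where "HFam X = {Kfun M G \<pi> LF X Z | Z. Z \<in> DD}"

lemma Hfun_HFam: "Hfun M G \<pi> LF X = ess_sup_fam M (HFam X)"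
  unfolding Hfun_def HFam_def ..

lemma H_exists:
  assumes X: "X \<in> LF"
  shows "\<exists>g. (\<forall>n. g n \<in> HFam X) \<and> (AE x in M. incseq (\<lambda>n. g n x)) \<and>
             is_ess_sup M (HFam X) (\<lambda>x. SUP n. g n x)"
proof (rule ess_sup_exists[OF P])
  show "HFam X \<noteq> {}" using nonempty unfolding HFam_def by blast
  show "HFam X \<subseteq> borel_measurable M"
  proof
    fix f assume "f \<in> HFam X"
    then obtain Z where "Z \<in> DD" "f = Kfun M G \<pi> LF X Z" unfolding HFam_def by blast
    then show "f \<in> borel_measurable M" using K_is[OF _ X] unfolding is_ess_inf_def by blast
  qed
  show "\<forall>f\<in>HFam X. \<forall>g\<in>HFam X. \<exists>h\<in>HFam X. AE x in M. f x \<le> h x \<and> g x \<le> h x"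
  proof (intro ballI)
    fix f g assume "f \<in> HFam X" "g \<in> HFam X"
    then obtain Z1 Z2 where Z: "Z1 \<in> DD" "f = Kfun M G \<pi> LF X Z1" "Z2 \<in> DD" "g = Kfun M G \<pi> LF X Z2"
      unfolding HFam_def by blast
    obtain Z where ZD: "Z \<in> DD" and a: "AE x in M. Kfun M G \<pi> LF X Z1 x \<le> Kfun M G \<pi> LF X Z x \<and>
                           Kfun M G \<pi> LF X Z2 x \<le> Kfun M G \<pi> LF X Z x"
      using H_dir[OF Z(1) Z(3) X] by blast
    have m: "Kfun M G \<pi> LF X Z \<in> HFam X" using ZD unfolding HFam_def by blast
    from a have "AE x in M. f x \<le> Kfun M G \<pi> LF X Z x \<and> g x \<le> Kfun M G \<pi> LF X Z x"
      unfolding Z(2) Z(4) .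
    then show "\<exists>h\<in>HFam X. AE x in M. f x \<le> h x \<and> g x \<le> h x"
      using m by (rule bexI[where x="Kfun M G \<pi> LF X Z"])
  qed
qed

lemma H_is:
  assumes X: "X \<in> LF"
  shows "is_ess_sup M (HFam X) (Hfun M G \<pi> LF X)"
proof -
  have "\<exists>Y. is_ess_sup M (HFam X) Y" using H_exists[OF X] by blast
  then show ?thesis unfolding Hfun_HFam ess_sup_fam_def by (rule someI_ex)
qed

lemma part1:
  assumes X: "X \<in> LF" and Y: "Y \<in> LF" and le: "AE x in M. X x \<le> Y x"
  shows "AE x in M. Hfun M G \<pi> LF X x \<le> Hfun M G \<pi> LF Y x"
proof -
  have "\<forall>f\<in>HFam X. \<exists>g\<in>HFam Y. AE x in M. x \<in> space M \<longrightarrow> f x \<le> g x"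
  proof
    fix f assume "f \<in> HFam X"
    then obtain Z where Z: "Z \<in> DD" "f = Kfun M G \<pi> LF X Z" unfolding HFam_def by blast
    have "AE x in M. x \<in> space M \<longrightarrow> f x \<le> Kfun M G \<pi> LF Y Z x"
      using K_mono[OF Z(1) X Y le] unfolding Z(2) by eventually_elim simp
    moreover have "Kfun M G \<pi> LF Y Z \<in> HFam Y" using Z unfolding HFam_def by blast
    ultimately show "\<exists>g\<in>HFam Y. AE x in M. x \<in> space M \<longrightarrow> f x \<le> g x"
      by (rule bexI[where x="Kfun M G \<pi> LF Y Z"])
  qed
  then have "AE x in M. x \<in> space M \<longrightarrow> Hfun M G \<pi> LF X x \<le> Hfun M G \<pi> LF Y x"
    by (rule ess_sup_local[OF H_is[OF X] H_is[OF Y] sets.top])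
  then show ?thesis using AE_space by eventually_elim simp
qed

lemma part2:
  assumes X: "X \<in> LF" and A: "A \<in> sets G"
  shows "AE x in M. Hfun M G \<pi> LF (\<lambda>y. X y * indicator A y) x * indicator A x
                  = Hfun M G \<pi> LF X x * indicator A x"
proof -
  define XA where "XA = (\<lambda>y. X y * indicator A y)"
  have Am: "A \<in> sets M" by (rule sGM[OF A])
  have XA: "XA \<in> LF" unfolding XA_def by (rule LF_ind[OF X Am])
  have "\<forall>f\<in>HFam X. \<exists>g\<in>HFam XA. AE x in M. x \<in> A \<longrightarrow> f x \<le> g x"
  proof
    fix f assume "f \<in> HFam X"
    then obtain Z where Z: "Z \<in> DD" "f = Kfun M G \<pi> LF X Z" unfolding HFam_def by blast
    have "AE x in M. x \<in> A \<longrightarrow> f x \<le> Kfun M G \<pi> LF XA Z x"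
      using K_restr[OF Z(1) X A] unfolding Z(2) XA_def by eventually_elim simp
    moreover have "Kfun M G \<pi> LF XA Z \<in> HFam XA" using Z unfolding HFam_def by blast
    ultimately show "\<exists>g\<in>HFam XA. AE x in M. x \<in> A \<longrightarrow> f x \<le> g x"
      by (rule bexI[where x="Kfun M G \<pi> LF XA Z"])
  qed
  then have a: "AE x in M. x \<in> A \<longrightarrow> Hfun M G \<pi> LF X x \<le> Hfun M G \<pi> LF XA x"
    by (rule ess_sup_local[OF H_is[OF X] H_is[OF XA] Am])
  have "\<forall>f\<in>HFam XA. \<exists>g\<in>HFam X. AE x in M. x \<in> A \<longrightarrow> f x \<le> g x"
  proof
    fix f assume "f \<in> HFam XA"
    then obtain Z where Z: "Z \<in> DD" "f = Kfun M G \<pi> LF XA Z" unfolding HFam_def by blast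
    have "AE x in M. x \<in> A \<longrightarrow> f x \<le> Kfun M G \<pi> LF X Z x"
      using K_restr[OF Z(1) X A] unfolding Z(2) XA_def by eventually_elim simp
    moreover have "Kfun M G \<pi> LF X Z \<in> HFam X" using Z unfolding HFam_def by blast
    ultimately show "\<exists>g\<in>HFam X. AE x in M. x \<in> A \<longrightarrow> f x \<le> g x"
      by (rule bexI[where x="Kfun M G \<pi> LF X Z"])
  qed
  then have b: "AE x in M. x \<in> A \<longrightarrow> Hfun M G \<pi> LF XA x \<le> Hfun M G \<pi> LF X x"
    by (rule ess_sup_local[OF H_is[OF XA] H_is[OF X] Am])
  from a b show ?thesis unfolding XA_def
    by eventually_elim (auto simp: indicator_def intro: antisym)
qed

end

context setting
begin

interpretation prob_space M by (rule P)

lemma inner_seq: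
  assumes Z: "Z \<in> DD" and X: "X \<in> LF"
  shows "\<exists>\<xi>s :: nat \<Rightarrow> 'a \<Rightarrow> real. (\<forall>m. \<xi>s m \<in> LF \<and>
           (AE x in dens_meas M Z. real_cond_exp (dens_meas M Z) G (\<xi>s m) x
                                        \<ge> real_cond_exp (dens_meas M Z) G X x)) \<and>
         (AE x in M. decseq (\<lambda>m. ereal (\<pi> (\<xi>s m) x)) \<and>
                 (\<lambda>m. ereal (\<pi> (\<xi>s m) x)) \<longlonglongrightarrow> Kfun M G \<pi> LF X Z x)"
proof -
  obtain g :: "nat \<Rightarrow> 'a \<Rightarrow> ereal" where g: "\<forall>n. g n \<in> Fam Z X" "AE x in M. decseq (\<lambda>n. g n x)"
      "is_ess_inf M (Fam Z X) (\<lambda>x. INF n. g n x)"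
    using K_exists[OF Z X] by blast
  have "\<forall>m. \<exists>\<xi>. g m = (\<lambda>x. ereal (\<pi> \<xi> x)) \<and> \<xi> \<in> LF \<and>
           (AE x in dens_meas M Z. real_cond_exp (dens_meas M Z) G \<xi> x
                                        \<ge> real_cond_exp (dens_meas M Z) G X x)"
    using g(1) unfolding Fam_def by blast
  then have "\<exists>\<xi>s. \<forall>m. g m = (\<lambda>x. ereal (\<pi> (\<xi>s m) x)) \<and> \<xi>s m \<in> LF \<and>
           (AE x in dens_meas M Z. real_cond_exp (dens_meas M Z) G (\<xi>s m) x
                                        \<ge> real_cond_exp (dens_meas M Z) G X x)" by (rule choice)
  then obtain \<xi>s where xs: "\<forall>m. g m = (\<lambda>x. ereal (\<pi> (\<xi>s m) x)) \<and> \<xi>s m \<in> LF \<and>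
           (AE x in dens_meas M Z. real_cond_exp (dens_meas M Z) G (\<xi>s m) x
                                        \<ge> real_cond_exp (dens_meas M Z) G X x)"
    by blast
  have gx: "g m x = ereal (\<pi> (\<xi>s m) x)" for m x using xs by simp
  have u: "AE x in M. (INF n. g n x) = Kfun M G \<pi> LF X Z x"
    by (rule ess_inf_unique[OF g(3) K_is[OF Z X]])
  have "AE x in M. decseq (\<lambda>m. ereal (\<pi> (\<xi>s m) x)) \<and>
                 (\<lambda>m. ereal (\<pi> (\<xi>s m) x)) \<longlonglongrightarrow> Kfun M G \<pi> LF X Z x"
    using g(2) u
  proof eventually_elim
    case (elim x)
    have "(\<lambda>n. g n x) \<longlonglongrightarrow> (INF n. g n x)" by (rule LIMSEQ_INF[OF elim(1)])
    then show ?case using elim by (simp add: gx)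
  qed
  moreover have "\<forall>m. \<xi>s m \<in> LF \<and>
           (AE x in dens_meas M Z. real_cond_exp (dens_meas M Z) G (\<xi>s m) x
                                        \<ge> real_cond_exp (dens_meas M Z) G X x)" using xs by simp
  ultimately show ?thesis by (intro exI[where x=\<xi>s] conjI)
qed

lemma part3:
  assumes X: "X \<in> LF"
  shows "\<exists>Q :: nat \<Rightarrow> ('a \<Rightarrow> real). \<exists>\<xi> :: nat \<Rightarrow> nat \<Rightarrow> ('a \<Rightarrow> real).
        (\<forall>k. Q k \<in> oc_dual M LF \<inter> prob_densities M) \<and>
        (\<forall>k m. \<xi> k m \<in> LF \<and>
           (AE x in dens_meas M (Q k). real_cond_exp (dens_meas M (Q k)) G (\<xi> k m) x
                                        \<ge> real_cond_exp (dens_meas M (Q k)) G X x)) \<and>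
        (\<forall>k. AE x in M. decseq (\<lambda>m. ereal (\<pi> (\<xi> k m) x)) \<and>
                 (\<lambda>m. ereal (\<pi> (\<xi> k m) x)) \<longlonglongrightarrow> Kfun M G \<pi> LF X (Q k) x) \<and>
        (AE x in M. incseq (\<lambda>k. Kfun M G \<pi> LF X (Q k) x) \<and>
                 (\<lambda>k. Kfun M G \<pi> LF X (Q k) x) \<longlonglongrightarrow> Hfun M G \<pi> LF X x) \<and>
        (AE x in M. Hfun M G \<pi> LF X x = lim (\<lambda>k. lim (\<lambda>m. ereal (\<pi> (\<xi> k m) x))))"
proof -
  obtain f :: "nat \<Rightarrow> 'a \<Rightarrow> ereal" where f: "\<forall>n. f n \<in> HFam X" "AE x in M. incseq (\<lambda>n. f n x)"
      "is_ess_sup M (HFam X) (\<lambda>x. SUP n. f n x)"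
    using H_exists[OF X] by blast
  have "\<forall>k. \<exists>Z. Z \<in> DD \<and> f k = Kfun M G \<pi> LF X Z" using f(1) unfolding HFam_def by blast
  then have "\<exists>Q. \<forall>k. Q k \<in> DD \<and> f k = Kfun M G \<pi> LF X (Q k)" by (rule choice)
  then obtain Q where Q: "\<forall>k. Q k \<in> DD \<and> f k = Kfun M G \<pi> LF X (Q k)" by blast
  have QD: "Q k \<in> DD" for k using Q by blast
  have fQ: "f k x = Kfun M G \<pi> LF X (Q k) x" for k x using Q by simp
  have "\<forall>k. \<exists>\<xi>s :: nat \<Rightarrow> 'a \<Rightarrow> real. (\<forall>m. \<xi>s m \<in> LF \<and>
           (AE x in dens_meas M (Q k). real_cond_exp (dens_meas M (Q k)) G (\<xi>s m) x
                                        \<ge> real_cond_exp (dens_meas M (Q k)) G X x)) \<and>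
         (AE x in M. decseq (\<lambda>m. ereal (\<pi> (\<xi>s m) x)) \<and>
                 (\<lambda>m. ereal (\<pi> (\<xi>s m) x)) \<longlonglongrightarrow> Kfun M G \<pi> LF X (Q k) x)"
    using inner_seq[OF QD X] by blast
  then have "\<exists>\<xi>. \<forall>k. (\<forall>m. \<xi> k m \<in> LF \<and>
           (AE x in dens_meas M (Q k). real_cond_exp (dens_meas M (Q k)) G (\<xi> k m) x
                                        \<ge> real_cond_exp (dens_meas M (Q k)) G X x)) \<and>
         (AE x in M. decseq (\<lambda>m. ereal (\<pi> (\<xi> k m) x)) \<and>
                 (\<lambda>m. ereal (\<pi> (\<xi> k m) x)) \<longlonglongrightarrow> Kfun M G \<pi> LF X (Q k) x)" by (rule choice)
  then obtain \<xi> where xi: "\<forall>k. (\<forall>m. \<xi> k m \<in> LF \<and>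
           (AE x in dens_meas M (Q k). real_cond_exp (dens_meas M (Q k)) G (\<xi> k m) x
                                        \<ge> real_cond_exp (dens_meas M (Q k)) G X x)) \<and>
         (AE x in M. decseq (\<lambda>m. ereal (\<pi> (\<xi> k m) x)) \<and>
                 (\<lambda>m. ereal (\<pi> (\<xi> k m) x)) \<longlonglongrightarrow> Kfun M G \<pi> LF X (Q k) x)"
    by blast
  have u: "AE x in M. (SUP n. f n x) = Hfun M G \<pi> LF X x"
    by (rule ess_sup_unique[OF f(3) H_is[OF X]])
  have outer: "AE x in M. incseq (\<lambda>k. Kfun M G \<pi> LF X (Q k) x) \<and>
                 (\<lambda>k. Kfun M G \<pi> LF X (Q k) x) \<longlonglongrightarrow> Hfun M G \<pi> LF X x"
    using f(2) u
  proof eventually_elim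
    case (elim x)
    have "(\<lambda>n. f n x) \<longlonglongrightarrow> (SUP n. f n x)" by (rule LIMSEQ_SUP[OF elim(1)])
    then show ?case using elim by (simp add: fQ)
  qed
  have innerAE: "AE x in M. \<forall>k. (\<lambda>m. ereal (\<pi> (\<xi> k m) x)) \<longlonglongrightarrow> Kfun M G \<pi> LF X (Q k) x"
  proof -
    have "\<forall>k. AE x in M. (\<lambda>m. ereal (\<pi> (\<xi> k m) x)) \<longlonglongrightarrow> Kfun M G \<pi> LF X (Q k) x"
    proof
      fix k
      have "AE x in M. decseq (\<lambda>m. ereal (\<pi> (\<xi> k m) x)) \<and>
                 (\<lambda>m. ereal (\<pi> (\<xi> k m) x)) \<longlonglongrightarrow> Kfun M G \<pi> LF X (Q k) x" using xi by simp
      then show "AE x in M. (\<lambda>m. ereal (\<pi> (\<xi> k m) x)) \<longlonglongrightarrow> Kfun M G \<pi> LF X (Q k) x"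
        by eventually_elim simp
    qed
    then show ?thesis by (simp add: AE_all_countable)
  qed
  have ll: "AE x in M. Hfun M G \<pi> LF X x = lim (\<lambda>k. lim (\<lambda>m. ereal (\<pi> (\<xi> k m) x)))"
    using outer innerAE
  proof eventually_elim
    case (elim x)
    have "(\<lambda>k. lim (\<lambda>m. ereal (\<pi> (\<xi> k m) x))) = (\<lambda>k. Kfun M G \<pi> LF X (Q k) x)"
    proof (rule ext)
      fix k show "lim (\<lambda>m. ereal (\<pi> (\<xi> k m) x)) = Kfun M G \<pi> LF X (Q k) x"
        by (rule limI) (use elim(2) in blast)
    qed
    moreover have "lim (\<lambda>k. Kfun M G \<pi> LF X (Q k) x) = Hfun M G \<pi> LF X x"
      by (rule limI) (use elim(1) in blast)
    ultimately show ?case by simp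
  qed
  have c1: "\<forall>k. Q k \<in> oc_dual M LF \<inter> prob_densities M" using QD by simp
  have c2: "\<forall>k m. \<xi> k m \<in> LF \<and>
           (AE x in dens_meas M (Q k). real_cond_exp (dens_meas M (Q k)) G (\<xi> k m) x
                                        \<ge> real_cond_exp (dens_meas M (Q k)) G X x)" using xi by simp
  have c3: "\<forall>k. AE x in M. decseq (\<lambda>m. ereal (\<pi> (\<xi> k m) x)) \<and>
                 (\<lambda>m. ereal (\<pi> (\<xi> k m) x)) \<longlonglongrightarrow> Kfun M G \<pi> LF X (Q k) x" using xi by simp
  show ?thesis
    by (rule exI[where x=Q], rule exI[where x=\<xi>]) (intro conjI c1 c2 c3 outer ll)
qed

end

theorem lemma20:
  fixes M G :: "'a measure"
    and LF LG :: "('a \<Rightarrow> real) set"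
    and \<pi> :: "('a \<Rightarrow> real) \<Rightarrow> ('a \<Rightarrow> real)"
  assumes P: "prob_space M"
    and G: "subalgebra M G"
    and LF: "vec_lattice M M LF"
    and LG: "vec_lattice M G LG"
    and dual: "vec_lattice M M (oc_dual M LF)"
    and nonempty: "oc_dual M LF \<inter> prob_densities M \<noteq> {}"
    and maps: "\<forall>X\<in>LF. \<pi> X \<in> LG"
    and welldef: "\<forall>X\<in>LF. \<forall>Y\<in>LF. (AE x in M. X x = Y x) \<longrightarrow> (AE x in M. \<pi> X x = \<pi> Y x)"
    and REG: "\<forall>A\<in>sets G. \<forall>X\<in>LF. \<forall>Y\<in>LF.
       AE x in M. \<pi> (\<lambda>y. X y * indicator A y + Y y * indicator (space M - A) y) x
                  = \<pi> X x * indicator A x + \<pi> Y x * indicator (space M - A) x"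
  shows
    "(\<forall>X\<in>LF. \<forall>Y\<in>LF. (AE x in M. X x \<le> Y x) \<longrightarrow>
        (AE x in M. Hfun M G \<pi> LF X x \<le> Hfun M G \<pi> LF Y x))
   \<and> (\<forall>A\<in>sets G. \<forall>X\<in>LF. AE x in M.
        Hfun M G \<pi> LF (\<lambda>y. X y * indicator A y) x * indicator A x
          = Hfun M G \<pi> LF X x * indicator A x)
   \<and> (\<forall>X\<in>LF. \<exists>Q :: nat \<Rightarrow> ('a \<Rightarrow> real). \<exists>\<xi> :: nat \<Rightarrow> nat \<Rightarrow> ('a \<Rightarrow> real).
        (\<forall>k. Q k \<in> oc_dual M LF \<inter> prob_densities M) \<and>
        (\<forall>k m. \<xi> k m \<in> LF \<and>
           (AE x in dens_meas M (Q k). real_cond_exp (dens_meas M (Q k)) G (\<xi> k m) x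
                                        \<ge> real_cond_exp (dens_meas M (Q k)) G X x)) \<and>
        (\<forall>k. AE x in M. decseq (\<lambda>m. ereal (\<pi> (\<xi> k m) x)) \<and>
                 (\<lambda>m. ereal (\<pi> (\<xi> k m) x)) \<longlonglongrightarrow> Kfun M G \<pi> LF X (Q k) x) \<and>
        (AE x in M. incseq (\<lambda>k. Kfun M G \<pi> LF X (Q k) x) \<and>
                 (\<lambda>k. Kfun M G \<pi> LF X (Q k) x) \<longlonglongrightarrow> Hfun M G \<pi> LF X x) \<and>
        (AE x in M. Hfun M G \<pi> LF X x = lim (\<lambda>k. lim (\<lambda>m. ereal (\<pi> (\<xi> k m) x)))))"
proof -
  interpret S: setting M G LF LG \<pi>
    using P G LF LG dual nonempty maps REG by (simp add: setting_def)
  have 1: "\<forall>X\<in>LF. \<forall>Y\<in>LF. (AE x in M. X x \<le> Y x) \<longrightarrow>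
        (AE x in M. Hfun M G \<pi> LF X x \<le> Hfun M G \<pi> LF Y x)"
    by (intro ballI impI) (rule S.part1)
  have 2: "\<forall>A\<in>sets G. \<forall>X\<in>LF. AE x in M.
        Hfun M G \<pi> LF (\<lambda>y. X y * indicator A y) x * indicator A x
          = Hfun M G \<pi> LF X x * indicator A x"
    by (intro ballI) (rule S.part2)
  have 3: "\<forall>X\<in>LF. \<exists>Q :: nat \<Rightarrow> ('a \<Rightarrow> real). \<exists>\<xi> :: nat \<Rightarrow> nat \<Rightarrow> ('a \<Rightarrow> real).
        (\<forall>k. Q k \<in> oc_dual M LF \<inter> prob_densities M) \<and>
        (\<forall>k m. \<xi> k m \<in> LF \<and>
           (AE x in dens_meas M (Q k). real_cond_exp (dens_meas M (Q k)) G (\<xi> k m) x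
                                        \<ge> real_cond_exp (dens_meas M (Q k)) G X x)) \<and>
        (\<forall>k. AE x in M. decseq (\<lambda>m. ereal (\<pi> (\<xi> k m) x)) \<and>
                 (\<lambda>m. ereal (\<pi> (\<xi> k m) x)) \<longlonglongrightarrow> Kfun M G \<pi> LF X (Q k) x) \<and>
        (AE x in M. incseq (\<lambda>k. Kfun M G \<pi> LF X (Q k) x) \<and>
                 (\<lambda>k. Kfun M G \<pi> LF X (Q k) x) \<longlonglongrightarrow> Hfun M G \<pi> LF X x) \<and>
        (AE x in M. Hfun M G \<pi> LF X x = lim (\<lambda>k. lim (\<lambda>m. ereal (\<pi> (\<xi> k m) x))))"
    by (intro ballI) (rule S.part3)
  show ?thesis using 1 2 3 by (intro conjI)
qed

end
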